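(* If $T\in\mathcal{T}$, then $\gamma_e(T)=\gamma(T)$.
   Context: All graphs are finite, simple and undirected; subcubic means maximum degree at most $3$; an endvertex is a vertex of degree at most $1$; $P_1$ is the one-vertex graph. $\gamma(G)$ is the domination number of $G$; a minimum dominating set is a dominating set of size $\gamma(G)$. For $X\subseteq V(G)$, $\gamma(G,X)$ is the minimum size of a set $D\subseteq V(G)$ such that every vertex of $X\setminus D$ has a neighbor in $D$. For $D\subseteq V(G)$ and vertices $u,v$, $\mathrm{dist}_{(G,D)}(u,v)$ is the minimum number of edges of a path $P$ in $G$ between $u$ and $v$ such that $D$ contains exactly one endvertex of $P$ and no internal vertex of $P$ ($\infty$ if none; $\mathrm{dist}_{(G,D)}(u,u)=0$ for $u\in D$); $w_{(G,D)}(u)=\sum_{v\in D}\left(\frac12\right)^{\mathrm{dist}_{(G,D)}(u,v)-1}$ with $\left(\frac12\right)^\infty=0$. $D$ is an exponential dominating set if $w_{(G,D)}(u)\ge1$ for all $u\in V(G)$; $\gamma_e(G)$ is the minimum size of such a set. For a graph $G$ and vertex $x$, $\tau_G(x)$ is the minimum real $\tau$ such that there exists $D\subseteq V(G)$ with $|D|<\gamma_e(G)$, $x\notin D$, and $w_{(G,D)}(u)+\left(\frac12\right)^{\mathrm{dist}_{G-D}(x,u)}\tau\ge 1$ for every $u\in V(G)\setminus D$ (here $\mathrm{dist}_{G-D}$ is the usual distance in $G-D$). Operations on trees, producing a tree $T$ from a tree $T'$: Operation 1: $T$ has an endvertex $y$ with neighbor $x$ such that $T'=T-y$ and $x$ belongs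 to some minimum dominating set of $T'$. Operation 2: $T$ contains a path $xyz$ where $y$ has degree $2$ in $T$, $z$ is an endvertex of $T$, $T'=T-\{y,z\}$, and $\tau_{T'}(x)>1$ or $\gamma(T',V(T')\setminus\{x\})<\gamma(T')$. Operation 3: $T$ contains a path $wxyz$ where $x$ and $y$ have degree $2$ in $T$, $z$ is an endvertex of $T$, $T'=T-\{x,y,z\}$, and $\tau_{T'}(w)>\frac12$. $\mathcal{T}$ is the family of subcubic trees obtained from $P_1$ by applying finite sequences of Operations 1, 2, 3. *)

theory Defs
  imports Complex_Main "HOL-Library.Extended_Nat" "HOL-Library.Extended_Real"
begin

type_synonym 'a graph = "'a set \<times> 'a set set"

definition verts :: "'a graph \<Rightarrow> 'a set" where "verts G = fst G"
definition edges :: "'a graph \<Rightarrow> 'a set set" where "edges G = snd G"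

definition degree :: "'a graph \<Rightarrow> 'a \<Rightarrow> nat" where
  "degree G v = card {u \<in> verts G. {u, v} \<in> edges G}"

definition subcubic :: "'a graph \<Rightarrow> bool" where
  "subcubic G \<longleftrightarrow> (\<forall>v \<in> verts G. degree G v \<le> 3)"

definition gpath :: "'a graph \<Rightarrow> 'a list \<Rightarrow> bool" where
  "gpath G p \<longleftrightarrow> p \<noteq> [] \<and> distinct p \<and> set p \<subseteq> verts G \<and>
     (\<forall>i. Suc i < length p \<longrightarrow> {p ! i, p ! Suc i} \<in> edges G)"

definition dist :: "'a graph \<Rightarrow> 'a \<Rightarrow> 'a \<Rightarrow> enat" where
  "dist G u v = Inf {enat (length p - 1) | p. gpath G p \<and> hd p = u \<and> last p = v}"

definition del :: "'a graph \<Rightarrow> 'a set \<Rightarrow> 'a graph" where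
  "del G D = (verts G - D, {e \<in> edges G. e \<inter> D = {}})"

definition distD :: "'a graph \<Rightarrow> 'a set \<Rightarrow> 'a \<Rightarrow> 'a \<Rightarrow> enat" where
  "distD G D u v = Inf {enat (length p - 1) | p. gpath G p \<and> hd p = u \<and> last p = v \<and>
      card ({hd p, last p} \<inter> D) = 1 \<and>
      (\<forall>i. 0 < i \<and> Suc i < length p \<longrightarrow> p ! i \<notin> D)}"

definition half_pow :: "enat \<Rightarrow> real" where
  "half_pow d = (case d of enat n \<Rightarrow> (1/2) ^ n | \<infinity> \<Rightarrow> 0)"

text \<open>(1/2)^(d-1) = 2 * (1/2)^d, with value 0 at infinity.\<close>
definition wgt :: "'a graph \<Rightarrow> 'a set \<Rightarrow> 'a \<Rightarrow> real" where
  "wgt G D u = (\<Sum>v\<in>D. 2 * half_pow (distD G D u v))"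

definition exp_dom :: "'a graph \<Rightarrow> 'a set \<Rightarrow> bool" where
  "exp_dom G D \<longleftrightarrow> D \<subseteq> verts G \<and> (\<forall>u \<in> verts G. wgt G D u \<ge> 1)"

definition gamma_e :: "'a graph \<Rightarrow> nat" where
  "gamma_e G = (LEAST k. \<exists>D. exp_dom G D \<and> card D = k)"

definition dominating :: "'a graph \<Rightarrow> 'a set \<Rightarrow> bool" where
  "dominating G D \<longleftrightarrow> D \<subseteq> verts G \<and>
     (\<forall>v \<in> verts G - D. \<exists>u \<in> D. {u, v} \<in> edges G)"

definition gamma :: "'a graph \<Rightarrow> nat" where
  "gamma G = (LEAST k. \<exists>D. dominating G D \<and> card D = k)"

definition min_dom_set :: "'a graph \<Rightarrow> 'a set \<Rightarrow> bool" where
  "min_dom_set G D \<longleftrightarrow> dominating G D \<and> card D = gamma G"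

definition gammaX :: "'a graph \<Rightarrow> 'a set \<Rightarrow> nat" where
  "gammaX G X = (LEAST k. \<exists>D. D \<subseteq> verts G \<and> card D = k \<and>
      (\<forall>v \<in> X - D. \<exists>u \<in> D. {u, v} \<in> edges G))"

text \<open>tau_G(x), as an extended real (the minimum is attained whenever the set is
nonempty; the empty set yields \<infinity>).\<close>
definition tau :: "'a graph \<Rightarrow> 'a \<Rightarrow> ereal" where
  "tau G x = Inf {ereal t | t. \<exists>D. D \<subseteq> verts G \<and> card D < gamma_e G \<and> x \<notin> D \<and>
      (\<forall>u \<in> verts G - D. wgt G D u + half_pow (dist (del G D) x u) * t \<ge> 1)}"

inductive_set obtainable :: "'a graph set" where
  base: "({v}, {}) \<in> obtainable"
| op1: "\<lbrakk>(V, E) \<in> obtainable; x \<in> V; y \<notin> V;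
         \<exists>D. min_dom_set (V, E) D \<and> x \<in> D\<rbrakk>
        \<Longrightarrow> (insert y V, insert {x, y} E) \<in> obtainable"
| op2: "\<lbrakk>(V, E) \<in> obtainable; x \<in> V; y \<notin> V; z \<notin> V; y \<noteq> z;
         tau (V, E) x > 1 \<or> gammaX (V, E) (V - {x}) < gamma (V, E)\<rbrakk>
        \<Longrightarrow> (V \<union> {y, z}, E \<union> {{x, y}, {y, z}}) \<in> obtainable"
| op3: "\<lbrakk>(V, E) \<in> obtainable; w \<in> V; x \<notin> V; y \<notin> V; z \<notin> V;
         x \<noteq> y; y \<noteq> z; x \<noteq> z; tau (V, E) w > 1/2\<rbrakk>
        \<Longrightarrow> (V \<union> {x, y, z}, E \<union> {{w, x}, {x, y}, {y, z}}) \<in> obtainable"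

end

theory Submission
  imports Defs
begin

definition addleaf :: "'a graph \<Rightarrow> 'a \<Rightarrow> 'a \<Rightarrow> 'a graph" where
  "addleaf G x y = (insert y (verts G), insert {x,y} (edges G))"

definition wfE :: "'a graph \<Rightarrow> bool" where
  "wfE G \<longleftrightarrow> (\<forall>e\<in>edges G. e \<subseteq> verts G)"

definition leafext :: "'a graph \<Rightarrow> 'a graph \<Rightarrow> 'a \<Rightarrow> 'a \<Rightarrow> bool" where
  "leafext H H' x y \<longleftrightarrow> verts H' = insert y (verts H) \<and> edges H \<subseteq> edges H'
     \<and> edges H' \<subseteq> insert {x,y} (edges H)"

lemma verts_addleaf[simp]: "verts (addleaf G x y) = insert y (verts G)"
  by (simp add: addleaf_def verts_def)
lemma edges_addleaf[simp]: "edges (addleaf G x y) = insert {x,y} (edges G)"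
  by (simp add: addleaf_def edges_def)
lemma verts_pair[simp]: "verts (V,E) = V" by (simp add: verts_def)
lemma edges_pair[simp]: "edges (V,E) = E" by (simp add: edges_def)
lemma verts_del[simp]: "verts (del G D) = verts G - D" by (simp add: del_def verts_def)
lemma edges_del[simp]: "edges (del G D) = {e \<in> edges G. e \<inter> D = {}}" by (simp add: del_def edges_def)

lemma gpath_mono: "gpath H p \<Longrightarrow> verts H \<subseteq> verts H' \<Longrightarrow> edges H \<subseteq> edges H' \<Longrightarrow> gpath H' p"
  unfolding gpath_def by blast

lemma gpath_del: "gpath (del G D) p \<longleftrightarrow> gpath G p \<and> set p \<inter> D = {}"
proof
  assume a: "gpath (del G D) p"
  then show "gpath G p \<and> set p \<inter> D = {}" unfolding gpath_def by auto
next
  assume a: "gpath G p \<and> set p \<inter> D = {}"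
  have "{p ! i, p ! Suc i} \<inter> D = {}" if "Suc i < length p" for i
  proof -
    have "p!i \<in> set p" "p ! Suc i \<in> set p" using that by auto
    then show ?thesis using a by blast
  qed
  with a show "gpath (del G D) p" unfolding gpath_def by auto
qed

lemma gpath_single: "a \<in> verts G \<Longrightarrow> gpath G [a]"
  unfolding gpath_def by simp

lemma gpath_rev: "gpath G p \<Longrightarrow> gpath G (rev p)"
proof -
  assume g: "gpath G p"
  let ?n = "length p"
  have "{rev p ! i, rev p ! Suc i} \<in> edges G" if "Suc i < length (rev p)" for i
  proof -
    define j where "j = ?n - Suc (Suc i)"
    have j: "Suc j < ?n" "Suc j = ?n - Suc i" using that by (auto simp: j_def)
    have "{p ! j, p ! Suc j} \<in> edges G" using g j unfolding gpath_def by blast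
    moreover have "rev p ! i = p ! Suc j" using that j by (simp add: rev_nth)
    moreover have "rev p ! Suc i = p ! j" using that j by (simp add: rev_nth j_def)
    ultimately show ?thesis by (simp add: insert_commute)
  qed
  with g show ?thesis unfolding gpath_def by auto
qed

lemma gpath_Cons: "gpath G (a # q) \<Longrightarrow> q \<noteq> [] \<Longrightarrow> gpath G q"
proof -
  assume g: "gpath G (a # q)" and q: "q \<noteq> []"
  have "{q ! i, q ! Suc i} \<in> edges G" if "Suc i < length q" for i
    using g that unfolding gpath_def by (metis Suc_less_eq length_Cons nth_Cons_Suc)
  with g q show ?thesis unfolding gpath_def by auto
qed

lemma gpath_snoc: "gpath G (q @ [a]) \<Longrightarrow> q \<noteq> [] \<Longrightarrow> gpath G q"
proof -
  assume g: "gpath G (q @ [a])" and q: "q \<noteq> []"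
  have "{q ! i, q ! Suc i} \<in> edges G" if "Suc i < length q" for i
  proof -
    have "{(q@[a]) ! i, (q@[a]) ! Suc i} \<in> edges G" using g that unfolding gpath_def by auto
    then show ?thesis using that by (simp add: nth_append)
  qed
  with g q show ?thesis unfolding gpath_def by auto
qed

lemma gpath_snoc_intro:
  assumes "gpath G q" "a \<in> verts G" "a \<notin> set q" "{last q, a} \<in> edges G"
  shows "gpath G (q @ [a])"
proof -
  have qn: "q \<noteq> []" using assms(1) unfolding gpath_def by auto
  have "{(q@[a]) ! i, (q@[a]) ! Suc i} \<in> edges G" if "Suc i < length (q@[a])" for i
  proof (cases "Suc i < length q")
    case True
    then show ?thesis using assms(1) by (simp add: nth_append gpath_def)
  next
    case False
    then have "i = length q - 1" "Suc i = length q" using that by auto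
    then show ?thesis using assms(4) qn by (simp add: nth_append last_conv_nth)
  qed
  with assms show ?thesis unfolding gpath_def by auto
qed

lemma gpath_Cons_intro:
  assumes "gpath G q" "a \<in> verts G" "a \<notin> set q" "{a, hd q} \<in> edges G"
  shows "gpath G (a # q)"
proof -
  have "gpath G (rev q @ [a])"
    using assms by (intro gpath_snoc_intro gpath_rev)
       (auto simp: last_rev gpath_def insert_commute)
  from gpath_rev[OF this] show ?thesis by simp
qed

lemma leafext_noy:
  assumes "leafext H H' x y" "gpath H' p" "y \<notin> set p"
  shows "gpath H p"
proof -
  have "{p ! i, p ! Suc i} \<in> edges H" if "Suc i < length p" for i
  proof -
    have e: "{p ! i, p ! Suc i} \<in> edges H'" using assms(2) that unfolding gpath_def by auto
    have "p!i \<in> set p" "p ! Suc i \<in> set p" using that by auto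
    then have "y \<notin> {p ! i, p ! Suc i}" using assms(3) by blast
    then have "{p ! i, p ! Suc i} \<noteq> {x,y}" by blast
    then show ?thesis using e assms(1) unfolding leafext_def by blast
  qed
  with assms show ?thesis unfolding gpath_def leafext_def by auto
qed

lemma leafext_edge_y:
  assumes "leafext H H' x y" "wfE H" "y \<notin> verts H" "{a, y} \<in> edges H'"
  shows "a = x"
proof -
  have "{a,y} \<notin> edges H" using assms(2,3) unfolding wfE_def by auto
  then have "{a,y} = {x,y}" using assms(1,4) unfolding leafext_def by auto
  then show ?thesis by (auto simp: doubleton_eq_iff)
qed

lemma leafext_y:
  assumes le: "leafext H H' x y" and wf: "wfE H" and yn: "y \<notin> verts H"
    and g: "gpath H' p" and yp: "y \<in> set p"
  shows "p = [y] \<or> (\<exists>q. p = q @ [y] \<and> gpath H q \<and> last q = x)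
           \<or> (\<exists>q. p = y # q \<and> gpath H q \<and> hd q = x)"
proof -
  obtain k where k: "k < length p" "p ! k = y" using yp by (auto simp: in_set_conv_nth)
  have dist: "distinct p" and ne: "p \<noteq> []" using g unfolding gpath_def by auto
  have edg: "{p ! i, p ! Suc i} \<in> edges H'" if "Suc i < length p" for i
    using g that unfolding gpath_def by auto
  show ?thesis
  proof (cases "length p = 1")
    case True
    then have "p = [y]" using k by (cases p) auto
    then show ?thesis by simp
  next
    case len: False
    show ?thesis
    proof (cases "k = 0")
      case True
      define q where "q = tl p"
      have p: "p = y # q" using k True ne unfolding q_def by (cases p) auto
      have qn: "q \<noteq> []" using len p by auto
      have gq: "gpath H' q" using gpath_Cons[OF _ qn] g p by simp
      have "y \<notin> set q" using dist p by simp
      then have "gpath H q" using leafext_noy[OF le gq] by simp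
      moreover have "hd q = x"
      proof -
        have "{p ! 0, p ! Suc 0} \<in> edges H'" using edg[of 0] qn p by simp
        then have "{hd q, y} \<in> edges H'" using p qn by (simp add: hd_conv_nth insert_commute)
        then show ?thesis by (rule leafext_edge_y[OF le wf yn])
      qed
      ultimately show ?thesis using p by blast
    next
      case k0: False
      have ex: "p ! (k - 1) = x"
      proof -
        have "{p ! (k-1), p ! Suc (k-1)} \<in> edges H'" using edg[of "k-1"] k k0 by simp
        then have "{p ! (k-1), y} \<in> edges H'" using k0 k by simp
        then show ?thesis by (rule leafext_edge_y[OF le wf yn])
      qed
      show ?thesis
      proof (cases "Suc k < length p")
        case True
        have "{p ! k, p ! Suc k} \<in> edges H'" using edg[OF True] by simp
        then have "{p ! Suc k, y} \<in> edges H'" using k by (simp add: insert_commute)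
        then have "p ! Suc k = x" by (rule leafext_edge_y[OF le wf yn])
        then have "p ! Suc k = p ! (k - 1)" using ex by simp
        moreover have "k - 1 < length p" using k by simp
        ultimately have "Suc k = k - 1" using nth_eq_iff_index_eq[OF dist True] by blast
        then show ?thesis by simp
      next
        case False
        then have kl: "k = length p - 1" using k by auto
        have "last p = y" using kl k ne by (simp add: last_conv_nth)
        then have p: "p = butlast p @ [y]" using ne append_butlast_last_id[OF ne] by simp
        define q where "q = butlast p"
        have p: "p = q @ [y]" using p q_def by simp
        have qn: "q \<noteq> []" using len p by auto
        have gq: "gpath H' q" using gpath_snoc[OF _ qn] g p by simp
        have "y \<notin> set q" using dist p by simp
        then have "gpath H q" using leafext_noy[OF le gq] by simp
        moreover have "last q = x"
        proof -
          have "q ! (k - 1) = x" using ex p kl k0 by (simp add: nth_append)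
          then show ?thesis using kl p qn by (simp add: last_conv_nth)
        qed
        ultimately show ?thesis using p by blast
      qed
    qed
  qed
qed

lemma Inf_enat_in: "S \<noteq> {} \<Longrightarrow> Inf S \<in> (S::enat set)"
  unfolding Inf_enat_def by (auto intro: LeastI)

lemma Inf_eSuc: "Inf (eSuc ` (S::enat set)) = eSuc (Inf S)"
proof (cases "S = {}")
  case True then show ?thesis by (simp add: Inf_enat_def)
next
  case False
  have "Inf (eSuc ` S) \<le> eSuc (Inf S)" using Inf_enat_in[OF False] by (simp add: Inf_lower)
  moreover have "eSuc (Inf S) \<le> Inf (eSuc ` S)"
    by (rule Inf_greatest) (auto simp: Inf_lower)
  ultimately show ?thesis by simp
qed

lemma dist_notin: "a \<notin> verts G \<Longrightarrow> dist G a b = \<infinity>"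
proof -
  assume a: "a \<notin> verts G"
  have "{enat (length p - 1) | p. gpath G p \<and> hd p = a \<and> last p = b} = {}"
  proof -
    have False if "gpath G p" "hd p = a" for p
    proof -
      have "p \<noteq> []" "set p \<subseteq> verts G" using that(1) unfolding gpath_def by auto
      then have "hd p \<in> verts G" using hd_in_set by blast
      then show False using that(2) a by simp
    qed
    then show ?thesis by auto
  qed
  then show ?thesis unfolding dist_def by (simp add: Inf_enat_def)
qed

lemma dist_self: "a \<in> verts G \<Longrightarrow> dist G a a = 0"
proof -
  assume a: "a \<in> verts G"
  have "enat (length [a] - 1) \<in> {enat (length p - 1) | p. gpath G p \<and> hd p = a \<and> last p = a}"
    using gpath_single[OF a] by (intro CollectI exI[of _ "[a]"]) simp
  then have "enat 0 \<in> {enat (length p - 1) | p. gpath G p \<and> hd p = a \<and> last p = a}" by simp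
  then have "dist G a a \<le> enat 0" unfolding dist_def by (rule Inf_lower)
  then show ?thesis by (simp add: zero_enat_def[symmetric])
qed

lemma dist_sym_le: "dist G b a \<le> dist G a b"
proof -
  have "{enat (length p - 1) | p. gpath G p \<and> hd p = a \<and> last p = b}
     \<subseteq> {enat (length p - 1) | p. gpath G p \<and> hd p = b \<and> last p = a}"
  proof
    fix e assume "e \<in> {enat (length p - 1) | p. gpath G p \<and> hd p = a \<and> last p = b}"
    then obtain p where p: "e = enat (length p - 1)" "gpath G p" "hd p = a" "last p = b" by blast
    have ne: "p \<noteq> []" using p(2) unfolding gpath_def by auto
    have "gpath G (rev p)" using gpath_rev[OF p(2)] .
    moreover have "hd (rev p) = b" "last (rev p) = a" using ne p by (auto simp: hd_rev last_rev)
    ultimately show "e \<in> {enat (length p - 1) | p. gpath G p \<and> hd p = b \<and> last p = a}"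
      using p(1) by (metis (mono_tags, lifting) length_rev mem_Collect_eq)
  qed
  then show ?thesis unfolding dist_def by (rule Inf_superset_mono)
qed

lemma dist_sym: "dist G a b = dist G b a"
  using dist_sym_le[of G a b] dist_sym_le[of G b a] by simp

lemma dist_notin2: "b \<notin> verts G \<Longrightarrow> dist G a b = \<infinity>"
  using dist_notin dist_sym by metis

lemma dist_leafext_old:
  assumes le: "leafext H H' x y" and wf: "wfE H" and yn: "y \<notin> verts H"
    and a: "a \<noteq> y" and b: "b \<noteq> y"
  shows "dist H' a b = dist H a b"
proof -
  have "gpath H' p \<and> hd p = a \<and> last p = b \<longleftrightarrow> gpath H p \<and> hd p = a \<and> last p = b" for p
  proof
    assume h: "gpath H' p \<and> hd p = a \<and> last p = b"
    have "y \<notin> set p"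
    proof
      assume "y \<in> set p"
      from leafext_y[OF le wf yn _ this] h
      have "p = [y] \<or> (\<exists>q. p = q @ [y] \<and> gpath H q \<and> last q = x)
           \<or> (\<exists>q. p = y # q \<and> gpath H q \<and> hd q = x)" by simp
      then show False using h a b by auto
    qed
    then show "gpath H p \<and> hd p = a \<and> last p = b" using leafext_noy[OF le] h by simp
  next
    assume h: "gpath H p \<and> hd p = a \<and> last p = b"
    moreover have "verts H \<subseteq> verts H'" "edges H \<subseteq> edges H'" using le unfolding leafext_def by auto
    ultimately show "gpath H' p \<and> hd p = a \<and> last p = b"
      using gpath_mono by blast
  qed
  then show ?thesis unfolding dist_def by simp
qed

lemma dist_leafext_new:
  assumes le: "leafext H H' x y" and wf: "wfE H" and yn: "y \<notin> verts H"
    and a: "a \<noteq> y" and ex: "x \<in> verts H \<Longrightarrow> {x,y} \<in> edges H'"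
  shows "dist H' a y = eSuc (dist H a x)"
proof -
  let ?S = "{enat (length q - 1) | q. gpath H q \<and> hd q = a \<and> last q = x}"
  let ?S' = "{enat (length p - 1) | p. gpath H' p \<and> hd p = a \<and> last p = y}"
  have "?S' = eSuc ` ?S"
  proof (intro equalityI subsetI)
    fix e assume "e \<in> ?S'"
    then obtain p where p: "e = enat (length p - 1)" "gpath H' p" "hd p = a" "last p = y" by blast
    have yp: "y \<in> set p" using p(2,4) unfolding gpath_def by auto
    from leafext_y[OF le wf yn p(2) yp]
    have "p = [y] \<or> (\<exists>q. p = q @ [y] \<and> gpath H q \<and> last q = x)
           \<or> (\<exists>q. p = y # q \<and> gpath H q \<and> hd q = x)" .
    moreover have "p \<noteq> [y]" using p(3) a by auto
    moreover have "\<not> (\<exists>q. p = y # q \<and> gpath H q \<and> hd q = x)"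
    proof
      assume "\<exists>q. p = y # q \<and> gpath H q \<and> hd q = x"
      then show False using p(3) a by auto
    qed
    ultimately obtain q where q: "p = q @ [y]" "gpath H q" "last q = x" by blast
    have qn: "q \<noteq> []" using q(2) unfolding gpath_def by auto
    have "hd q = a" using p(3) q(1) qn by simp
    moreover have "e = eSuc (enat (length q - 1))" using p(1) q(1) qn by (simp add: eSuc_enat)
    ultimately show "e \<in> eSuc ` ?S" using q by blast
  next
    fix e assume "e \<in> eSuc ` ?S"
    then obtain q where q: "e = eSuc (enat (length q - 1))" "gpath H q" "hd q = a" "last q = x" by blast
    have qn: "q \<noteq> []" using q(2) unfolding gpath_def by auto
    have xv: "x \<in> verts H" using q(2,4) qn unfolding gpath_def by auto
    have "verts H \<subseteq> verts H'" "edges H \<subseteq> edges H'" using le unfolding leafext_def by auto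
    then have "gpath H' q" using q(2) gpath_mono by blast
    moreover have "y \<in> verts H'" using le unfolding leafext_def by auto
    moreover have "y \<notin> set q" using q(2) yn unfolding gpath_def by auto
    moreover have "{last q, y} \<in> edges H'" using ex[OF xv] q(4) by simp
    ultimately have g: "gpath H' (q @ [y])" by (rule gpath_snoc_intro)
    have "e = enat (length (q @ [y]) - 1)" using q(1) qn by (simp add: eSuc_enat)
    moreover have "hd (q @ [y]) = a" "last (q @ [y]) = y" using q qn by auto
    ultimately show "e \<in> ?S'" using g by blast
  qed
  then show ?thesis unfolding dist_def by (simp add: Inf_eSuc)
qed

lemma leafext_addleaf: "leafext G (addleaf G x y) x y"
  unfolding leafext_def by auto

lemma wfE_addleaf: "wfE G \<Longrightarrow> x \<in> verts G \<Longrightarrow> wfE (addleaf G x y)"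
  unfolding wfE_def by auto

lemma wfE_del: "wfE G \<Longrightarrow> wfE (del G D)"
  unfolding wfE_def by auto

lemma del_addleaf_in:
  assumes "wfE G" "y \<notin> verts G" "y \<in> D"
  shows "del (addleaf G x y) D = del G (D - {y})"
proof -
  have "verts (del (addleaf G x y) D) = verts (del G (D - {y}))" using assms by auto
  moreover have "edges (del (addleaf G x y) D) = edges (del G (D - {y}))"
    using assms unfolding wfE_def by auto
  ultimately show ?thesis by (metis prod.collapse verts_def edges_def)
qed

lemma leafext_del:
  "y \<notin> D \<Longrightarrow> y \<notin> verts G \<Longrightarrow> leafext (del G D) (del (addleaf G x y) D) x y"
  unfolding leafext_def by auto

lemma dist_del_addleaf_old:
  assumes "wfE G" "y \<notin> verts G" "y \<notin> D" "a \<noteq> y" "b \<noteq> y"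
  shows "dist (del (addleaf G x y) D) a b = dist (del G D) a b"
  using dist_leafext_old[OF leafext_del[OF assms(3,2)] wfE_del[OF assms(1)]] assms by simp

lemma dist_del_addleaf_new:
  assumes "wfE G" "y \<notin> verts G" "y \<notin> D" "a \<noteq> y"
  shows "dist (del (addleaf G x y) D) a y = eSuc (dist (del G D) a x)"
  using dist_leafext_new[OF leafext_del[OF assms(3,2)] wfE_del[OF assms(1)]] assms by auto

lemma dist_del_mono: "dist (del G D) a b \<le> dist (del G (insert w D)) a b"
proof -
  have "{enat (length p - 1) | p. gpath (del G (insert w D)) p \<and> hd p = a \<and> last p = b}
     \<subseteq> {enat (length p - 1) | p. gpath (del G D) p \<and> hd p = a \<and> last p = b}"
    by (auto simp: gpath_del)
  then show ?thesis unfolding dist_def by (rule Inf_superset_mono)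
qed

lemma hp_inf[simp]: "half_pow \<infinity> = 0" by (simp add: half_pow_def)
lemma hp_enat[simp]: "half_pow (enat n) = (1/2)^n" by (simp add: half_pow_def)
lemma hp_0[simp]: "half_pow 0 = 1" by (simp add: half_pow_def zero_enat_def)
lemma hp_eSuc: "half_pow (eSuc e) = half_pow e / 2"
  by (cases e) (auto simp: eSuc_enat)
lemma hp_nonneg: "0 \<le> half_pow e" by (cases e) auto
lemma hp_le1: "half_pow e \<le> 1" by (cases e) (auto simp: power_le_one)
lemma hp_anti: "d1 \<le> d2 \<Longrightarrow> half_pow d2 \<le> half_pow d1"
  by (cases d1; cases d2) (auto simp: power_decreasing)

definition okD :: "'a set \<Rightarrow> 'a list \<Rightarrow> bool" where
  "okD D p \<longleftrightarrow> card ({hd p, last p} \<inter> D) = 1 \<and>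
      (\<forall>i. 0 < i \<and> Suc i < length p \<longrightarrow> p ! i \<notin> D)"

lemma distD_okD: "distD G D u v = Inf {enat (length p - 1) | p. gpath G p \<and> hd p = u \<and> last p = v \<and> okD D p}"
  unfolding distD_def okD_def by simp

lemma Inf_snoc:
  assumes "\<And>p. P p \<longleftrightarrow> (\<exists>q. p = q @ [y] \<and> Q q)" "\<And>q. Q q \<Longrightarrow> q \<noteq> []"
  shows "Inf {enat (length p - 1) | p. P p} = eSuc (Inf {enat (length q - 1) | q. Q q})"
proof -
  have "{enat (length p - 1) | p. P p} = eSuc ` {enat (length q - 1) | q. Q q}"
  proof (intro equalityI subsetI)
    fix e assume "e \<in> {enat (length p - 1) | p. P p}"
    then obtain p where p: "e = enat (length p - 1)" "P p" by blast
    then obtain q where q: "p = q @ [y]" "Q q" using assms(1) by blast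
    have "q \<noteq> []" using assms(2) q(2) .
    then have "e = eSuc (enat (length q - 1))" using p q by (simp add: eSuc_enat)
    then show "e \<in> eSuc ` {enat (length q - 1) | q. Q q}" using q by blast
  next
    fix e assume "e \<in> eSuc ` {enat (length q - 1) | q. Q q}"
    then obtain q where q: "e = eSuc (enat (length q - 1))" "Q q" by blast
    have "q \<noteq> []" using assms(2) q(2) .
    then have "e = enat (length (q @ [y]) - 1)" using q by (simp add: eSuc_enat)
    moreover have "P (q @ [y])" using assms(1) q(2) by blast
    ultimately show "e \<in> {enat (length p - 1) | p. P p}" by blast
  qed
  then show ?thesis by (simp add: Inf_eSuc)
qed

lemma paths_old:
  assumes le: "leafext H H' x y" and wf: "wfE H" and yn: "y \<notin> verts H"
    and a: "a \<noteq> y" and b: "b \<noteq> y"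
  shows "gpath H' p \<and> hd p = a \<and> last p = b \<longleftrightarrow> gpath H p \<and> hd p = a \<and> last p = b"
proof
  assume h: "gpath H' p \<and> hd p = a \<and> last p = b"
  have "y \<notin> set p"
  proof
    assume "y \<in> set p"
    from leafext_y[OF le wf yn _ this] h
    have "p = [y] \<or> (\<exists>q. p = q @ [y] \<and> gpath H q \<and> last q = x)
         \<or> (\<exists>q. p = y # q \<and> gpath H q \<and> hd q = x)" by simp
    moreover have "p \<noteq> [y]"
    proof
      assume "p = [y]" then have "hd p = y" by simp
      with h a show False by simp
    qed
    moreover have "\<not> (\<exists>q. p = q @ [y] \<and> gpath H q \<and> last q = x)" using h b by auto
    moreover have "\<not> (\<exists>q. p = y # q \<and> gpath H q \<and> hd q = x)" using h a by auto
    ultimately show False by blast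
  qed
  then show "gpath H p \<and> hd p = a \<and> last p = b" using leafext_noy[OF le] h by simp
next
  assume h: "gpath H p \<and> hd p = a \<and> last p = b"
  moreover have "verts H \<subseteq> verts H'" "edges H \<subseteq> edges H'" using le unfolding leafext_def by auto
  ultimately show "gpath H' p \<and> hd p = a \<and> last p = b"
    using gpath_mono by blast
qed

lemma paths_to_y:
  assumes le: "leafext H H' x y" and wf: "wfE H" and yn: "y \<notin> verts H"
    and a: "a \<noteq> y" and ex: "x \<in> verts H \<Longrightarrow> {x,y} \<in> edges H'"
  shows "gpath H' p \<and> hd p = a \<and> last p = y \<longleftrightarrow> (\<exists>q. p = q @ [y] \<and> gpath H q \<and> hd q = a \<and> last q = x)"
proof
  assume p: "gpath H' p \<and> hd p = a \<and> last p = y"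
  have yp: "y \<in> set p" using p unfolding gpath_def by auto
  from leafext_y[OF le wf yn _ yp] p
  have "p = [y] \<or> (\<exists>q. p = q @ [y] \<and> gpath H q \<and> last q = x)
         \<or> (\<exists>q. p = y # q \<and> gpath H q \<and> hd q = x)" by simp
  moreover have "p \<noteq> [y]"
  proof
    assume "p = [y]" then have "hd p = y" by simp
    with p a show False by simp
  qed
  moreover have "\<not> (\<exists>q. p = y # q \<and> gpath H q \<and> hd q = x)"
  proof
    assume "\<exists>q. p = y # q \<and> gpath H q \<and> hd q = x"
    then show False using p a by auto
  qed
  ultimately obtain q where q: "p = q @ [y]" "gpath H q" "last q = x" by blast
  have qn: "q \<noteq> []" using q(2) unfolding gpath_def by auto
  have "hd q = a" using p q(1) qn by simp
  then show "\<exists>q. p = q @ [y] \<and> gpath H q \<and> hd q = a \<and> last q = x" using q by blast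
next
  assume "\<exists>q. p = q @ [y] \<and> gpath H q \<and> hd q = a \<and> last q = x"
  then obtain q where q: "p = q @ [y]" "gpath H q" "hd q = a" "last q = x" by blast
  have qn: "q \<noteq> []" using q(2) unfolding gpath_def by auto
  have xv: "x \<in> verts H" using q(2,4) qn unfolding gpath_def by auto
  have "verts H \<subseteq> verts H'" "edges H \<subseteq> edges H'" using le unfolding leafext_def by auto
  then have "gpath H' q" using q(2) gpath_mono by blast
  moreover have "y \<in> verts H'" using le unfolding leafext_def by auto
  moreover have "y \<notin> set q" using q(2) yn unfolding gpath_def by auto
  moreover have "{last q, y} \<in> edges H'" using ex[OF xv] q(4) by simp
  ultimately have g: "gpath H' (q @ [y])" by (rule gpath_snoc_intro)
  then show "gpath H' p \<and> hd p = a \<and> last p = y" using q qn by simp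
qed

lemma okD_cong: "(\<And>a. a \<in> set p \<Longrightarrow> (a \<in> D \<longleftrightarrow> a \<in> D')) \<Longrightarrow> p \<noteq> [] \<Longrightarrow> okD D p = okD D' p"
proof -
  assume h: "\<And>a. a \<in> set p \<Longrightarrow> (a \<in> D \<longleftrightarrow> a \<in> D')" and ne: "p \<noteq> []"
  have "{hd p, last p} \<inter> D = {hd p, last p} \<inter> D'" using h ne by auto
  moreover have "(p ! i \<notin> D) = (p ! i \<notin> D')" if "Suc i < length p" for i
    using h[of "p ! i"] that by simp
  ultimately show ?thesis unfolding okD_def by metis
qed

lemma okD_snoc_in:
  assumes "q \<noteq> []" "y \<in> D" "y \<notin> set q"
  shows "okD D (q @ [y]) \<longleftrightarrow> set q \<inter> D = {}"
proof -
  have hd: "hd (q @ [y]) = hd q" using assms by simp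
  have hq: "hd q \<noteq> y" using assms hd_in_set by fastforce
  have c: "card ({hd q, y} \<inter> D) = 1 \<longleftrightarrow> hd q \<notin> D"
  proof (cases "hd q \<in> D")
    case True then show ?thesis using assms hq by simp
  next
    case False
    then have "{hd q, y} \<inter> D = {y}" using assms by auto
    then show ?thesis using False by simp
  qed
  have i: "(\<forall>i. 0 < i \<and> Suc i < length (q @ [y]) \<longrightarrow> (q @ [y]) ! i \<notin> D) \<longleftrightarrow>
        (\<forall>i. 0 < i \<and> i < length q \<longrightarrow> q ! i \<notin> D)"
    by (auto simp: nth_append)
  have "(hd q \<notin> D \<and> (\<forall>i. 0 < i \<and> i < length q \<longrightarrow> q ! i \<notin> D)) \<longleftrightarrow> (\<forall>i < length q. q ! i \<notin> D)"
    using assms(1) by (auto simp: hd_conv_nth) (metis gr0I)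
  also have "\<dots> \<longleftrightarrow> set q \<inter> D = {}"
  proof
    assume h: "\<forall>i<length q. q!i \<notin> D" show "set q \<inter> D = {}" using h by (auto simp: in_set_conv_nth)
  next
    assume h: "set q \<inter> D = {}" show "\<forall>i<length q. q!i \<notin> D" using h nth_mem by blast
  qed
  finally show ?thesis unfolding okD_def using hd c i by simp
qed

lemma okD_snoc_out:
  assumes "q \<noteq> []" "y \<notin> D" "hd q \<in> D" "distinct q"
  shows "okD D (q @ [y]) \<longleftrightarrow> okD D q"
proof (cases "length q = 1")
  case True
  then obtain a where q: "q = [a]" by (cases q) auto
  then show ?thesis using assms unfolding okD_def by auto
next
  case False
  have "length q \<noteq> 0" using assms(1) by simp
  then have l2: "length q \<ge> 2" using False by linarith
  have "q ! 0 \<noteq> q ! (length q - 1)" using nth_eq_iff_index_eq[OF assms(4), of 0 "length q - 1"] l2 assms(1) by simp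
  then have hl: "hd q \<noteq> last q" using assms(1) by (simp add: hd_conv_nth last_conv_nth)
  have "card ({hd (q @ [y]), last (q @ [y])} \<inter> D) = 1" using assms by simp
  moreover have "card ({hd q, last q} \<inter> D) = 1 \<longleftrightarrow> last q \<notin> D"
  proof (cases "last q \<in> D")
    case True then show ?thesis using assms hl by simp
  next
    case False
    then have "{hd q, last q} \<inter> D = {hd q}" using assms by auto
    then show ?thesis using False by simp
  qed
  moreover have "(\<forall>i. 0 < i \<and> Suc i < length (q @ [y]) \<longrightarrow> (q @ [y]) ! i \<notin> D) \<longleftrightarrow>
        (\<forall>i. 0 < i \<and> i < length q \<longrightarrow> q ! i \<notin> D)"
    by (auto simp: nth_append)
  moreover have "(\<forall>i. 0 < i \<and> i < length q \<longrightarrow> q ! i \<notin> D) \<longleftrightarrow>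
       (last q \<notin> D \<and> (\<forall>i. 0 < i \<and> Suc i < length q \<longrightarrow> q ! i \<notin> D))"
  proof -
    have lq: "last q = q ! (length q - 1)" using assms(1) by (simp add: last_conv_nth)
    show ?thesis
    proof
      assume h: "\<forall>i. 0 < i \<and> i < length q \<longrightarrow> q ! i \<notin> D"
      then show "last q \<notin> D \<and> (\<forall>i. 0 < i \<and> Suc i < length q \<longrightarrow> q ! i \<notin> D)"
        using lq l2 by auto
    next
      assume h: "last q \<notin> D \<and> (\<forall>i. 0 < i \<and> Suc i < length q \<longrightarrow> q ! i \<notin> D)"
      show "\<forall>i. 0 < i \<and> i < length q \<longrightarrow> q ! i \<notin> D"
      proof (intro allI impI)
        fix i assume i: "0 < i \<and> i < length q"
        show "q ! i \<notin> D"
        proof (cases "Suc i < length q")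
          case True then show ?thesis using h i by blast
        next
          case False then have "i = length q - 1" using i by linarith
          then show ?thesis using h lq by simp
        qed
      qed
    qed
  qed
  ultimately show ?thesis unfolding okD_def by blast
qed

lemma distD_sym_le: "distD G D v u \<le> distD G D u v"
proof -
  have "{enat (length p - 1) | p. gpath G p \<and> hd p = u \<and> last p = v \<and> okD D p}
     \<subseteq> {enat (length p - 1) | p. gpath G p \<and> hd p = v \<and> last p = u \<and> okD D p}"
  proof
    fix e assume "e \<in> {enat (length p - 1) | p. gpath G p \<and> hd p = u \<and> last p = v \<and> okD D p}"
    then obtain p where p: "e = enat (length p - 1)" "gpath G p" "hd p = u" "last p = v" "okD D p" by blast
    have ne: "p \<noteq> []" using p(2) unfolding gpath_def by auto
    have "gpath G (rev p)" using gpath_rev[OF p(2)] .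
    moreover have "hd (rev p) = v" "last (rev p) = u" using ne p by (auto simp: hd_rev last_rev)
    moreover have "okD D (rev p)"
    proof -
      have "{hd (rev p), last (rev p)} = {hd p, last p}" using ne by (auto simp: hd_rev last_rev)
      moreover have "rev p ! i \<notin> D" if "0 < i" "Suc i < length (rev p)" for i
      proof -
        have "rev p ! i = p ! (length p - Suc i)" using that by (simp add: rev_nth)
        moreover have "0 < length p - Suc i" "Suc (length p - Suc i) < length p" using that by auto
        ultimately show ?thesis using p(5) unfolding okD_def by auto
      qed
      ultimately show ?thesis using p(5) unfolding okD_def by auto
    qed
    moreover have "e = enat (length (rev p) - 1)" using p(1) by simp
    ultimately show "e \<in> {enat (length p - 1) | p. gpath G p \<and> hd p = v \<and> last p = u \<and> okD D p}"
      unfolding mem_Collect_eq by (intro exI[of _ "rev p"]) simp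
  qed
  then show ?thesis unfolding distD_okD by (rule Inf_superset_mono)
qed

lemma distD_sym: "distD G D u v = distD G D v u"
  using distD_sym_le[of G D u v] distD_sym_le[of G D v u] by simp

lemma distD_self: "u \<in> D \<Longrightarrow> u \<in> verts G \<Longrightarrow> distD G D u u = 0"
proof -
  assume a: "u \<in> D" "u \<in> verts G"
  have "okD D [u]" using a unfolding okD_def by simp
  then have "enat 0 \<in> {enat (length p - 1) | p. gpath G p \<and> hd p = u \<and> last p = u \<and> okD D p}"
    using gpath_single[OF a(2)] by (intro CollectI exI[of _ "[u]"]) simp
  then have "distD G D u u \<le> enat 0" unfolding distD_okD by (rule Inf_lower)
  then show ?thesis by (simp add: zero_enat_def[symmetric])
qed

lemma distD_DD: "u \<in> D \<Longrightarrow> v \<in> D \<Longrightarrow> u \<noteq> v \<Longrightarrow> distD G D u v = \<infinity>"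
proof -
  assume a: "u \<in> D" "v \<in> D" "u \<noteq> v"
  have "{enat (length p - 1) | p. gpath G p \<and> hd p = u \<and> last p = v \<and> okD D p} = {}"
    using a unfolding okD_def by auto
  then show ?thesis unfolding distD_okD by (simp add: Inf_enat_def)
qed

lemma distD_le1: "{u, v} \<in> edges G \<Longrightarrow> u \<in> verts G \<Longrightarrow> v \<in> verts G \<Longrightarrow> u \<notin> D \<Longrightarrow> v \<in> D \<Longrightarrow>
   distD G D u v \<le> enat 1"
proof -
  assume a: "{u, v} \<in> edges G" "u \<in> verts G" "v \<in> verts G" "u \<notin> D" "v \<in> D"
  have "u \<noteq> v" using a by auto
  then have "gpath G [u, v]" using a unfolding gpath_def by (auto simp: less_Suc_eq)
  moreover have "okD D [u, v]" using a unfolding okD_def by auto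
  ultimately have "enat 1 \<in> {enat (length p - 1) | p. gpath G p \<and> hd p = u \<and> last p = v \<and> okD D p}"
    by (intro CollectI exI[of _ "[u,v]"]) simp
  then show ?thesis unfolding distD_okD by (rule Inf_lower)
qed

lemma distD_addleaf_old:
  assumes wf: "wfE G" and yn: "y \<notin> verts G" and u: "u \<noteq> y" and v: "v \<noteq> y"
  shows "distD (addleaf G x y) D u v = distD G (D - {y}) u v"
proof -
  have "(gpath (addleaf G x y) p \<and> hd p = u \<and> last p = v \<and> okD D p) \<longleftrightarrow>
        (gpath G p \<and> hd p = u \<and> last p = v \<and> okD (D - {y}) p)" for p
  proof (cases "gpath G p \<and> hd p = u \<and> last p = v")
    case True
    have "y \<notin> set p" using True yn unfolding gpath_def by auto
    then have "okD D p = okD (D - {y}) p" using True unfolding gpath_def by (intro okD_cong) auto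
    then show ?thesis using paths_old[OF leafext_addleaf wf yn u v, where p=p and x=x] True by simp
  next
    case False
    then show ?thesis using paths_old[OF leafext_addleaf wf yn u v, where p=p and x=x] by blast
  qed
  then show ?thesis unfolding distD_okD by simp
qed

lemma distD_addleaf_in:
  assumes wf: "wfE G" and yn: "y \<notin> verts G" and u: "u \<noteq> y" and yD: "y \<in> D"
  shows "distD (addleaf G x y) D u y = eSuc (dist (del G (D - {y})) u x)"
proof -
  have P: "(gpath (addleaf G x y) p \<and> hd p = u \<and> last p = y \<and> okD D p) \<longleftrightarrow>
      (\<exists>q. p = q @ [y] \<and> (gpath (del G (D - {y})) q \<and> hd q = u \<and> last q = x))" for p
  proof -
    have "(gpath (addleaf G x y) p \<and> hd p = u \<and> last p = y \<and> okD D p) \<longleftrightarrow>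
      (\<exists>q. p = q @ [y] \<and> gpath G q \<and> hd q = u \<and> last q = x \<and> okD D (q @ [y]))"
      using paths_to_y[OF leafext_addleaf wf yn u, where x=x and p=p] by auto
    also have "\<dots> \<longleftrightarrow> (\<exists>q. p = q @ [y] \<and> (gpath (del G (D - {y})) q \<and> hd q = u \<and> last q = x))"
    proof -
      have "okD D (q @ [y]) \<longleftrightarrow> set q \<inter> (D - {y}) = {}" if "gpath G q" for q
      proof -
        have "q \<noteq> []" "y \<notin> set q" using that yn unfolding gpath_def by auto
        then show ?thesis using okD_snoc_in[of q y D] yD by auto
      qed
      then show ?thesis by (auto simp: gpath_del)
    qed
    finally show ?thesis .
  qed
  have "distD (addleaf G x y) D u y = eSuc (Inf {enat (length q - 1) | q. gpath (del G (D - {y})) q \<and> hd q = u \<and> last q = x})"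
    unfolding distD_okD by (rule Inf_snoc[OF P]) (auto simp: gpath_def)
  then show ?thesis unfolding dist_def .
qed

lemma distD_addleaf_out:
  assumes wf: "wfE G" and yn: "y \<notin> verts G" and vD: "v \<in> D" and yD: "y \<notin> D"
  shows "distD (addleaf G x y) D v y = eSuc (distD G D v x)"
proof -
  have u: "v \<noteq> y" using vD yD by auto
  have P: "(gpath (addleaf G x y) p \<and> hd p = v \<and> last p = y \<and> okD D p) \<longleftrightarrow>
      (\<exists>q. p = q @ [y] \<and> (gpath G q \<and> hd q = v \<and> last q = x \<and> okD D q))" for p
  proof -
    have "(gpath (addleaf G x y) p \<and> hd p = v \<and> last p = y \<and> okD D p) \<longleftrightarrow>
      (\<exists>q. p = q @ [y] \<and> gpath G q \<and> hd q = v \<and> last q = x \<and> okD D (q @ [y]))"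
      using paths_to_y[OF leafext_addleaf wf yn u, where x=x and p=p] by auto
    also have "\<dots> \<longleftrightarrow> (\<exists>q. p = q @ [y] \<and> (gpath G q \<and> hd q = v \<and> last q = x \<and> okD D q))"
    proof -
      have "okD D (q @ [y]) \<longleftrightarrow> okD D q" if "gpath G q" "hd q = v" for q
      proof -
        have "q \<noteq> []" "distinct q" using that unfolding gpath_def by auto
        then show ?thesis using okD_snoc_out[of q y D] yD vD that(2) by auto
      qed
      then show ?thesis by auto
    qed
    finally show ?thesis .
  qed
  show ?thesis
    unfolding distD_okD by (rule Inf_snoc[OF P]) (auto simp: gpath_def)
qed

lemma wgt_nonneg: "0 \<le> wgt G D u"
  unfolding wgt_def by (rule sum_nonneg) (simp add: hp_nonneg)

lemma wgt_D:
  assumes "finite D" "D \<subseteq> verts G" "u \<in> D"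
  shows "wgt G D u = 2"
proof -
  have "wgt G D u = 2 * half_pow (distD G D u u) + (\<Sum>v\<in>D - {u}. 2 * half_pow (distD G D u v))"
    unfolding wgt_def using assms by (simp add: sum.remove)
  moreover have "distD G D u u = 0" using assms by (intro distD_self) auto
  moreover have "(\<Sum>v\<in>D - {u}. 2 * half_pow (distD G D u v)) = 0"
  proof (intro sum.neutral ballI)
    fix v assume "v \<in> D - {u}"
    then have "distD G D u v = \<infinity>" using distD_DD[of u D v G] assms by auto
    then show "2 * half_pow (distD G D u v) = 0" by simp
  qed
  ultimately show ?thesis by simp
qed

lemma wgt_addleaf_old:
  assumes wf: "wfE G" and fin: "finite (verts G)" and yn: "y \<notin> verts G"
    and D: "D \<subseteq> insert y (verts G)" and u: "u \<in> verts G"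
  shows "wgt (addleaf G x y) D u = wgt G (D - {y}) u +
           (if y \<in> D then half_pow (dist (del G (D - {y})) u x) else 0)"
proof -
  have finD: "finite D" using D fin finite_subset by blast
  have uy: "u \<noteq> y" using u yn by auto
  have c: "(\<Sum>v\<in>D - {y}. 2 * half_pow (distD (addleaf G x y) D u v)) = wgt G (D - {y}) u"
    unfolding wgt_def using distD_addleaf_old[OF wf yn uy] by (intro sum.cong) auto
  show ?thesis
  proof (cases "y \<in> D")
    case True
    have "wgt (addleaf G x y) D u = 2 * half_pow (distD (addleaf G x y) D u y)
        + (\<Sum>v\<in>D - {y}. 2 * half_pow (distD (addleaf G x y) D u v))"
      unfolding wgt_def using True finD by (simp add: sum.remove)
    also have "2 * half_pow (distD (addleaf G x y) D u y) = half_pow (dist (del G (D - {y})) u x)"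
      using distD_addleaf_in[OF wf yn uy True] by (simp add: hp_eSuc)
    finally show ?thesis using c True by simp
  next
    case False
    then show ?thesis using c unfolding wgt_def by simp
  qed
qed

lemma wgt_addleaf_new:
  assumes wf: "wfE G" and yn: "y \<notin> verts G" and D: "D \<subseteq> verts G"
  shows "wgt (addleaf G x y) D y = wgt G D x / 2"
proof -
  have yD: "y \<notin> D" using D yn by auto
  have "2 * half_pow (distD (addleaf G x y) D y v) = 2 * half_pow (distD G D x v) / 2" if "v \<in> D" for v
  proof -
    have "distD (addleaf G x y) D y v = distD (addleaf G x y) D v y" by (rule distD_sym)
    also have "\<dots> = eSuc (distD G D v x)" using distD_addleaf_out[OF wf yn that yD] .
    also have "distD G D v x = distD G D x v" by (rule distD_sym)
    finally show ?thesis by (simp add: hp_eSuc)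
  qed
  then show ?thesis unfolding wgt_def by (simp add: sum_divide_distrib)
qed

lemma dominating_exp_dom:
  assumes fin: "finite (verts G)" and d: "dominating G D"
  shows "exp_dom G D"
proof -
  have DV: "D \<subseteq> verts G" using d unfolding dominating_def by auto
  have finD: "finite D" using DV fin finite_subset by blast
  have "1 \<le> wgt G D u" if u: "u \<in> verts G" for u
  proof (cases "u \<in> D")
    case True then show ?thesis using wgt_D[OF finD DV] by simp
  next
    case False
    then obtain v where v: "v \<in> D" "{v, u} \<in> edges G" using d u unfolding dominating_def by blast
    have "distD G D u v \<le> enat 1"
      using v u False DV by (intro distD_le1) (auto simp: insert_commute)
    then have "half_pow (enat 1) \<le> half_pow (distD G D u v)" by (rule hp_anti)
    then have "1 \<le> 2 * half_pow (distD G D u v)" by simp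
    also have "\<dots> \<le> wgt G D u" unfolding wgt_def
      using finD v(1) by (intro member_le_sum) (auto simp: hp_nonneg)
    finally show ?thesis .
  qed
  then show ?thesis using DV unfolding exp_dom_def by blast
qed

inductive_set ltree :: "'a graph set" where
  lbase: "({v}, {}) \<in> ltree"
| lstep: "G \<in> ltree \<Longrightarrow> x \<in> verts G \<Longrightarrow> y \<notin> verts G \<Longrightarrow> addleaf G x y \<in> ltree"

lemma ltree_wf: "G \<in> ltree \<Longrightarrow> wfE G \<and> finite (verts G)"
  by (induction rule: ltree.induct) (auto simp: wfE_def)

lemma degree_addleaf:
  assumes wf: "wfE G" and fin: "finite (verts G)" and yn: "y \<notin> verts G" and x: "x \<in> verts G"
    and a: "a \<in> verts G"
  shows "degree (addleaf G x y) a = degree G a + (if a = x then 1 else 0)"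
proof -
  have e: "\<And>u. {u, a} \<in> edges G \<Longrightarrow> u \<in> verts G" using wf unfolding wfE_def by auto
  have ya: "y \<noteq> a" using a yn by auto
  have yE: "{y, a} \<notin> edges G" using wf yn unfolding wfE_def by auto
  show ?thesis
  proof (cases "a = x")
    case True
    have "{u \<in> insert y (verts G). {u, a} \<in> insert {x, y} (edges G)} = insert y {u \<in> verts G. {u, a} \<in> edges G}"
      using True ya yn by (auto simp: doubleton_eq_iff insert_commute)
    moreover have "y \<notin> {u \<in> verts G. {u, a} \<in> edges G}" using yn by auto
    moreover have "finite {u \<in> verts G. {u, a} \<in> edges G}" using fin by simp
    ultimately show ?thesis using True unfolding degree_def by simp
  next
    case False
    have "{u \<in> insert y (verts G). {u, a} \<in> insert {x, y} (edges G)} = {u \<in> verts G. {u, a} \<in> edges G}"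
      using False ya yn yE by (auto simp: doubleton_eq_iff)
    then show ?thesis using False unfolding degree_def by simp
  qed
qed

lemma degree_addleaf_y:
  assumes wf: "wfE G" and yn: "y \<notin> verts G" and x: "x \<in> verts G"
  shows "degree (addleaf G x y) y = 1"
proof -
  have "{u \<in> insert y (verts G). {u, y} \<in> insert {x, y} (edges G)} = {x}"
    using wf yn x unfolding wfE_def by (auto simp: doubleton_eq_iff)
  then show ?thesis unfolding degree_def by simp
qed

definition slack :: "'a graph \<Rightarrow> 'a set \<Rightarrow> 'a \<Rightarrow> real" where
  "slack G D w = (\<Sum>a\<in>verts G - D. (3 - real (degree G a)) * half_pow (dist (del G D) w a))"

lemma sum_shift:
  assumes "finite A"
  shows "(\<Sum>a\<in>A. f a - (if a = x then g a else 0)) = sum f A - (if x \<in> A then g x else (0::real))"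
  using assms by (simp add: sum_subtractf sum.delta)

lemma ident:
  assumes "G \<in> ltree"
  shows "D \<subseteq> verts G \<Longrightarrow> w \<in> verts G \<Longrightarrow> w \<notin> D \<Longrightarrow> wgt G D w + slack G D w = 3"
  using assms
proof (induction arbitrary: D w rule: ltree.induct)
  case (lbase v)
  then have D: "D = {}" "w = v" by auto
  have "degree ({v}, {}) v = 0" unfolding degree_def by simp
  moreover have "dist (del ({v}, {}) {}) v v = 0" by (rule dist_self) simp
  ultimately show ?case using D unfolding wgt_def slack_def by simp
next
  case (lstep G x y D' w)
  have wf: "wfE G" and fin: "finite (verts G)" using ltree_wf[OF lstep.hyps(1)] by auto
  note xV = lstep.hyps(2) and yn = lstep.hyps(3)
  let ?G' = "addleaf G x y"
  let ?V = "verts G"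
  have deg: "real (degree ?G' a) = real (degree G a) + (if a = x then 1 else 0)" if "a \<in> ?V" for a
    using degree_addleaf[OF wf fin yn xV that] by simp
  show ?case
  proof (cases "y \<in> D'")
    case True
    define D where "D = D' - {y}"
    have DV: "D \<subseteq> ?V" using lstep.prems(1) D_def by auto
    have wV: "w \<in> ?V" "w \<notin> D" using lstep.prems True D_def by auto
    have W: "wgt ?G' D' w = wgt G D w + half_pow (dist (del G D) w x)"
      using wgt_addleaf_old[OF wf fin yn lstep.prems(1)[simplified]] wV True D_def by simp
    have dl: "del ?G' D' = del G D" using del_addleaf_in[OF wf yn True] D_def by simp
    have VV: "verts ?G' - D' = ?V - D" using True D_def yn by auto
    have "slack ?G' D' w = (\<Sum>a\<in>?V - D. (3 - real (degree G a)) * half_pow (dist (del G D) w a)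
            - (if a = x then half_pow (dist (del G D) w a) else 0))"
      unfolding slack_def VV dl using deg by (intro sum.cong) (auto simp: algebra_simps)
    also have "\<dots> = slack G D w - (if x \<in> ?V - D then half_pow (dist (del G D) w x) else 0)"
      unfolding slack_def using fin by (intro sum_shift) simp
    also have "\<dots> = slack G D w - half_pow (dist (del G D) w x)"
    proof -
      have "x \<notin> ?V - D \<Longrightarrow> dist (del G D) w x = \<infinity>" using xV by (intro dist_notin2) auto
      then show ?thesis by auto
    qed
    finally show ?thesis using W lstep.IH[OF DV wV] by simp
  next
    case yD: False
    have DV: "D' \<subseteq> ?V" using lstep.prems(1) yD by auto
    have VV: "verts ?G' - D' = insert y (?V - D')" using yD by auto
    have yVD: "y \<notin> ?V - D'" using yn by auto
    show ?thesis
    proof (cases "w = y")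
      case False
      have wV: "w \<in> ?V" "w \<notin> D'" using lstep.prems False by auto
      have W: "wgt ?G' D' w = wgt G D' w"
        using wgt_addleaf_old[OF wf fin yn lstep.prems(1)[simplified]] wV yD by simp
      have "slack ?G' D' w = (3 - real (degree ?G' y)) * half_pow (dist (del ?G' D') w y)
          + (\<Sum>a\<in>?V - D'. (3 - real (degree ?G' a)) * half_pow (dist (del ?G' D') w a))"
        unfolding slack_def VV using fin yVD by simp
      also have "(3 - real (degree ?G' y)) * half_pow (dist (del ?G' D') w y)
          = half_pow (dist (del G D') w x)"
        using degree_addleaf_y[OF wf yn xV] dist_del_addleaf_new[OF wf yn yD False]
        by (simp add: hp_eSuc)
      also have "(\<Sum>a\<in>?V - D'. (3 - real (degree ?G' a)) * half_pow (dist (del ?G' D') w a))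
          = (\<Sum>a\<in>?V - D'. (3 - real (degree G a)) * half_pow (dist (del G D') w a)
            - (if a = x then half_pow (dist (del G D') w a) else 0))"
      proof (intro sum.cong refl)
        fix a assume a: "a \<in> ?V - D'"
        then have "a \<noteq> y" using yn by auto
        then have "dist (del ?G' D') w a = dist (del G D') w a"
          using dist_del_addleaf_old[OF wf yn yD False] by blast
        then show "(3 - real (degree ?G' a)) * half_pow (dist (del ?G' D') w a) =
          (3 - real (degree G a)) * half_pow (dist (del G D') w a)
            - (if a = x then half_pow (dist (del G D') w a) else 0)"
          using deg[of a] a by (simp add: algebra_simps)
      qed
      also have "\<dots> = slack G D' w - (if x \<in> ?V - D' then half_pow (dist (del G D') w x) else 0)"
        unfolding slack_def using fin by (intro sum_shift) simp
      also have "\<dots> = slack G D' w - half_pow (dist (del G D') w x)"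
      proof -
        have "x \<notin> ?V - D' \<Longrightarrow> dist (del G D') w x = \<infinity>" using xV by (intro dist_notin2) auto
        then show ?thesis by auto
      qed
      finally show ?thesis using W lstep.IH[OF DV wV] by simp
    next
      case True
      have W: "wgt ?G' D' w = wgt G D' x / 2" using wgt_addleaf_new[OF wf yn DV] True by simp
      have dyy: "dist (del ?G' D') y y = 0" using yD by (intro dist_self) simp
      have dya: "dist (del ?G' D') y a = eSuc (dist (del G D') x a)" if "a \<in> ?V" for a
      proof -
        have ay: "a \<noteq> y" using that yn by auto
        have "dist (del ?G' D') y a = dist (del ?G' D') a y" by (rule dist_sym)
        also have "\<dots> = eSuc (dist (del G D') a x)" by (rule dist_del_addleaf_new[OF wf yn yD ay])
        finally show ?thesis by (simp add: dist_sym)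
      qed
      have "slack ?G' D' w = (3 - real (degree ?G' y)) * half_pow (dist (del ?G' D') y y)
          + (\<Sum>a\<in>?V - D'. (3 - real (degree ?G' a)) * half_pow (dist (del ?G' D') y a))"
        unfolding slack_def VV True using fin yVD by simp
      also have "(3 - real (degree ?G' y)) * half_pow (dist (del ?G' D') y y) = 2"
        using degree_addleaf_y[OF wf yn xV] dyy by simp
      also have "(\<Sum>a\<in>?V - D'. (3 - real (degree ?G' a)) * half_pow (dist (del ?G' D') y a))
          = (\<Sum>a\<in>?V - D'. (3 - real (degree G a)) * half_pow (dist (del G D') x a) / 2
            - (if a = x then half_pow (dist (del G D') x a) / 2 else 0))"
        using deg dya by (intro sum.cong) (auto simp: algebra_simps hp_eSuc)
      also have "\<dots> = (\<Sum>a\<in>?V - D'. (3 - real (degree G a)) * half_pow (dist (del G D') x a) / 2)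
            - (if x \<in> ?V - D' then half_pow (dist (del G D') x x) / 2 else 0)"
        using fin by (intro sum_shift) simp
      also have "(\<Sum>a\<in>?V - D'. (3 - real (degree G a)) * half_pow (dist (del G D') x a) / 2)
          = slack G D' x / 2"
        unfolding slack_def by (simp add: sum_divide_distrib)
      finally have S: "slack ?G' D' w = 2 + (slack G D' x / 2 -
          (if x \<in> ?V - D' then half_pow (dist (del G D') x x) / 2 else 0))" .
      show ?thesis
      proof (cases "x \<in> D'")
        case False
        have "dist (del G D') x x = 0" using xV False by (intro dist_self) simp
        then show ?thesis using S W lstep.IH[OF DV xV False] False xV by simp
      next
        case xD: True
        have finD: "finite D'" using DV fin finite_subset by blast
        have "wgt G D' x = 2" using wgt_D[OF finD DV xD] .
        moreover have "slack G D' x = 0" unfolding slack_def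
          using xD by (intro sum.neutral) (auto simp: dist_notin)
        ultimately show ?thesis using S W xD by simp
      qed
    qed
  qed
qed

lemma slack_nonneg:
  assumes "subcubic G"
  shows "0 \<le> slack G D w"
  unfolding slack_def
proof (intro sum_nonneg)
  fix a assume "a \<in> verts G - D"
  then have "degree G a \<le> 3" using assms unfolding subcubic_def by auto
  then show "0 \<le> (3 - real (degree G a)) * half_pow (dist (del G D) w a)"
    using hp_nonneg by simp
qed

lemma wgt_le3:
  assumes "G \<in> ltree" "subcubic G" "D \<subseteq> verts G" "u \<in> verts G"
  shows "wgt G D u \<le> 3"
proof (cases "u \<in> D")
  case True
  have "finite D" using assms(3) ltree_wf[OF assms(1)] finite_subset by blast
  then show ?thesis using wgt_D[OF _ assms(3) True] by simp
next
  case False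
  then show ?thesis using ident[OF assms(1) assms(3,4) False] slack_nonneg[OF assms(2), of D u] by simp
qed

lemma gain:
  assumes T: "G \<in> ltree" and sc: "subcubic G" and D: "D \<subseteq> verts G"
    and w: "w \<in> verts G" "w \<notin> D" and u: "u \<in> verts G" "u \<notin> D" "u \<noteq> w"
  shows "wgt G D u + (3 - real (degree G w)) * half_pow (dist (del G D) w u) \<le> wgt G (insert w D) u"
proof -
  have fin: "finite (verts G)" using ltree_wf[OF T] by auto
  let ?c = "\<lambda>a. 3 - real (degree G a)"
  have c: "0 \<le> ?c a" if "a \<in> verts G" for a using sc that unfolding subcubic_def by auto
  have I1: "wgt G D u + slack G D u = 3" using ident[OF T D u(1,2)] .
  have I2: "wgt G (insert w D) u + slack G (insert w D) u = 3"
    using ident[OF T _ u(1)] D w u by auto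
  have "slack G D u = ?c w * half_pow (dist (del G D) u w)
        + (\<Sum>a\<in>verts G - D - {w}. ?c a * half_pow (dist (del G D) u a))"
    unfolding slack_def using fin w by (simp add: sum.remove)
  moreover have "dist (del G D) u w = dist (del G D) w u" by (rule dist_sym)
  ultimately have S1: "slack G D u = ?c w * half_pow (dist (del G D) w u)
        + (\<Sum>a\<in>verts G - D - {w}. ?c a * half_pow (dist (del G D) u a))" by simp
  have "(\<Sum>a\<in>verts G - D - {w}. ?c a * half_pow (dist (del G (insert w D)) u a))
      \<le> (\<Sum>a\<in>verts G - D - {w}. ?c a * half_pow (dist (del G D) u a))"
  proof (intro sum_mono)
    fix a assume "a \<in> verts G - D - {w}"
    then have "0 \<le> ?c a" using c by auto
    moreover have "half_pow (dist (del G (insert w D)) u a) \<le> half_pow (dist (del G D) u a)"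
      by (rule hp_anti[OF dist_del_mono])
    ultimately show "?c a * half_pow (dist (del G (insert w D)) u a) \<le> ?c a * half_pow (dist (del G D) u a)"
      by (simp add: mult_left_mono)
  qed
  moreover have "slack G (insert w D) u = (\<Sum>a\<in>verts G - D - {w}. ?c a * half_pow (dist (del G (insert w D)) u a))"
    unfolding slack_def by (intro sum.cong) auto
  ultimately show ?thesis using I1 I2 S1 by linarith
qed

lemma replace:
  assumes T: "G \<in> ltree" and sc: "subcubic G" and D: "D \<subseteq> verts G"
    and x: "x \<in> verts G" "degree G x \<le> 2"
    and h: "\<And>u. u \<in> verts G \<Longrightarrow> u \<notin> D \<Longrightarrow> 1 \<le> wgt G D u + half_pow (dist (del G D) x u)"
  shows "exp_dom G (insert x D)"
proof -
  have fin: "finite (verts G)" using ltree_wf[OF T] by auto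
  have DV: "insert x D \<subseteq> verts G" using D x by auto
  have finD: "finite (insert x D)" using finite_subset[OF DV fin] .
  have "1 \<le> wgt G (insert x D) u" if u: "u \<in> verts G" for u
  proof (cases "u \<in> insert x D")
    case True then show ?thesis using wgt_D[OF finD DV True] by simp
  next
    case False
    then have uD: "u \<notin> D" "u \<noteq> x" using u by auto
    show ?thesis
    proof (cases "x \<in> D")
      case True
      then have "dist (del G D) x u = \<infinity>" by (intro dist_notin) simp
      then show ?thesis using h[OF u uD(1)] True by (simp add: insert_absorb)
    next
      case xD: False
    have "wgt G D u + (3 - real (degree G x)) * half_pow (dist (del G D) x u) \<le> wgt G (insert x D) u"
      by (rule gain[OF T sc D x(1) xD u uD])
    moreover have "half_pow (dist (del G D) x u) \<le> (3 - real (degree G x)) * half_pow (dist (del G D) x u)"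
    proof -
      have "1 \<le> 3 - real (degree G x)" using x(2) by simp
      from mult_right_mono[OF this hp_nonneg[of "dist (del G D) x u"]] show ?thesis by simp
    qed
    ultimately show ?thesis using h[OF u uD(1)] by linarith
    qed
  qed
  then show ?thesis using DV unfolding exp_dom_def by blast
qed

lemma gamma_le: "dominating G D \<Longrightarrow> gamma G \<le> card D"
  unfolding gamma_def by (rule Least_le) blast

lemma gamma_ex: "finite (verts G) \<Longrightarrow> \<exists>D. dominating G D \<and> card D = gamma G"
proof -
  assume "finite (verts G)"
  have "dominating G (verts G)" unfolding dominating_def by auto
  then have "\<exists>k D. dominating G D \<and> card D = k" by blast
  then show ?thesis unfolding gamma_def by (rule LeastI_ex)
qed

lemma gamma_e_le: "exp_dom G D \<Longrightarrow> gamma_e G \<le> card D"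
  unfolding gamma_e_def by (rule Least_le) blast

lemma gamma_e_ex: "finite (verts G) \<Longrightarrow> \<exists>D. exp_dom G D \<and> card D = gamma_e G"
proof -
  assume f: "finite (verts G)"
  have "dominating G (verts G)" unfolding dominating_def by auto
  then have "exp_dom G (verts G)" using dominating_exp_dom[OF f] by blast
  then have "\<exists>k D. exp_dom G D \<and> card D = k" by blast
  then show ?thesis unfolding gamma_e_def by (rule LeastI_ex)
qed

lemma gamma_e_le_gamma: "finite (verts G) \<Longrightarrow> gamma_e G \<le> gamma G"
proof -
  assume f: "finite (verts G)"
  obtain D where D: "dominating G D" "card D = gamma G" using gamma_ex[OF f] by blast
  show ?thesis using gamma_e_le[OF dominating_exp_dom[OF f D(1)]] D(2) by simp
qed

lemma gammaX_ex: "X \<subseteq> verts G \<Longrightarrow> \<exists>D. D \<subseteq> verts G \<and> card D = gammaX G X \<and>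
      (\<forall>v \<in> X - D. \<exists>u \<in> D. {u, v} \<in> edges G)"
proof -
  assume "X \<subseteq> verts G"
  then have "verts G \<subseteq> verts G \<and> card (verts G) = card (verts G) \<and> (\<forall>v \<in> X - verts G. \<exists>u \<in> verts G. {u, v} \<in> edges G)" by auto
  then have "\<exists>k D. D \<subseteq> verts G \<and> card D = k \<and> (\<forall>v \<in> X - D. \<exists>u \<in> D. {u, v} \<in> edges G)" by blast
  then show ?thesis unfolding gammaX_def by (rule LeastI_ex)
qed

lemma subcubic_addleaf:
  assumes wf: "wfE G" and fin: "finite (verts G)" and yn: "y \<notin> verts G" and x: "x \<in> verts G"
    and sc: "subcubic (addleaf G x y)"
  shows "subcubic G" "degree G x \<le> 2"
proof -
  have "degree G a \<le> 3" if "a \<in> verts G" for a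
    using sc that degree_addleaf[OF wf fin yn x that] unfolding subcubic_def by auto
  then show "subcubic G" unfolding subcubic_def by auto
  show "degree G x \<le> 2"
    using sc x degree_addleaf[OF wf fin yn x x] unfolding subcubic_def by auto
qed

lemma op2_eq: "(V \<union> {y, z}, E \<union> {{x, y}, {y, z}}) = addleaf (addleaf (V, E) x y) y z"
  unfolding addleaf_def by auto

lemma op3_eq: "(V \<union> {x, y, z}, E \<union> {{w, x}, {x, y}, {y, z}}) = addleaf (addleaf (addleaf (V, E) w x) x y) y z"
  unfolding addleaf_def by auto

lemma op1_eq: "(insert y V, insert {x, y} E) = addleaf (V, E) x y"
  unfolding addleaf_def by auto

lemma obtainable_ltree: "(V, E) \<in> obtainable \<Longrightarrow> (V, E) \<in> ltree"
proof (induction V E rule: obtainable.induct)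
  case (base v) then show ?case by (rule ltree.lbase)
next
  case (op1 V E x y) then show ?case unfolding op1_eq by (intro ltree.lstep) auto
next
  case (op2 V E x y z) then show ?case unfolding op2_eq by (intro ltree.lstep) auto
next
  case (op3 V E w x y z) then show ?case unfolding op3_eq by (intro ltree.lstep) auto
qed

lemma dist_leaf:
  assumes "wfE H" "b \<notin> verts H" "u \<noteq> b"
  shows "dist (del (addleaf H a b) D) u b = (if b \<in> D then \<infinity> else eSuc (dist (del H D) u a))"
proof (cases "b \<in> D")
  case True then show ?thesis by (simp add: dist_notin2)
next
  case False then show ?thesis using dist_del_addleaf_new[OF assms(1,2) False assms(3)] by simp
qed

lemma case1:
  assumes T: "G \<in> ltree" and x: "x \<in> verts G" and yn: "y \<notin> verts G"
    and md: "\<exists>D. min_dom_set G D \<and> x \<in> D"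
    and sc': "subcubic (addleaf G x y)" and IH: "gamma G \<le> gamma_e G"
  shows "gamma (addleaf G x y) \<le> gamma_e (addleaf G x y)"
proof -
  have wf: "wfE G" and fin: "finite (verts G)" using ltree_wf[OF T] by auto
  have sc: "subcubic G" and dx: "degree G x \<le> 2" using subcubic_addleaf[OF wf fin yn x sc'] by auto
  have n: "gamma_e G = gamma G" using IH gamma_e_le_gamma[OF fin] by simp
  let ?T = "addleaf G x y"
  have finT: "finite (verts ?T)" using fin by simp
  obtain Dm where Dm: "min_dom_set G Dm" "x \<in> Dm" using md by blast
  have "dominating ?T Dm"
  proof -
    have d: "dominating G Dm" using Dm(1) unfolding min_dom_set_def by simp
    then have "Dm \<subseteq> verts ?T" unfolding dominating_def by auto
    moreover have "\<exists>u \<in> Dm. {u, v} \<in> edges ?T" if "v \<in> verts ?T - Dm" for v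
    proof (cases "v = y")
      case True then show ?thesis using Dm(2) by auto
    next
      case False
      then have "v \<in> verts G - Dm" using that by auto
      then show ?thesis using d unfolding dominating_def by auto
    qed
    ultimately show ?thesis unfolding dominating_def by blast
  qed
  then have g1: "gamma ?T \<le> gamma G"
    using gamma_le Dm(1) unfolding min_dom_set_def by fastforce
  obtain D where D: "exp_dom ?T D" "card D = gamma_e ?T" using gamma_e_ex[OF finT] by blast
  have DV: "D \<subseteq> insert y (verts G)" using D(1) unfolding exp_dom_def by simp
  have finD: "finite D" using finite_subset[OF DV] fin by simp
  have wT: "1 \<le> wgt ?T D u" if "u \<in> verts G" for u using D(1) that unfolding exp_dom_def by simp
  have "gamma_e G \<le> card D"
  proof (cases "y \<in> D")
    case False
    have "exp_dom G D"
    proof -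
      have "D \<subseteq> verts G" using DV False by auto
      moreover have "1 \<le> wgt G D u" if "u \<in> verts G" for u
        using wT[OF that] wgt_addleaf_old[OF wf fin yn DV that] False by simp
      ultimately show ?thesis unfolding exp_dom_def by blast
    qed
    then show ?thesis by (rule gamma_e_le)
  next
    case True
    define D0 where "D0 = D - {y}"
    have D0V: "D0 \<subseteq> verts G" using DV D0_def by auto
    have "exp_dom G (insert x D0)"
    proof (rule replace[OF T sc D0V x dx])
      fix u assume u: "u \<in> verts G" "u \<notin> D0"
      have "wgt ?T D u = wgt G D0 u + half_pow (dist (del G D0) u x)"
        using wgt_addleaf_old[OF wf fin yn DV u(1)] True D0_def by simp
      then show "1 \<le> wgt G D0 u + half_pow (dist (del G D0) x u)"
        using wT[OF u(1)] dist_sym[of "del G D0" u x] by simp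
    qed
    then have "gamma_e G \<le> card (insert x D0)" by (rule gamma_e_le)
    also have "\<dots> \<le> Suc (card D0)" using finite_subset[OF D0V fin] by (simp add: card_insert_if)
    also have "Suc (card D0) = card D" using True finD D0_def
      by (metis card_Suc_Diff1)
    finally show ?thesis .
  qed
  then show ?thesis using g1 n D(2) by simp
qed

lemma card_insert_Suc: "finite A \<Longrightarrow> card (insert a A) \<le> Suc (card A)"
  by (simp add: card_insert_if)

lemma case2:
  assumes T: "G \<in> ltree" and x: "x \<in> verts G" and yn: "y \<notin> verts G" and zn: "z \<notin> verts G"
    and yz: "y \<noteq> z"
    and cond: "1 < tau G x \<or> gammaX G (verts G - {x}) < gamma G"
    and sc': "subcubic (addleaf (addleaf G x y) y z)" and IH: "gamma G \<le> gamma_e G"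
  shows "gamma (addleaf (addleaf G x y) y z) \<le> gamma_e (addleaf (addleaf G x y) y z)"
proof -
  have wf: "wfE G" and fin: "finite (verts G)" using ltree_wf[OF T] by auto
  let ?T1 = "addleaf G x y"
  let ?T = "addleaf ?T1 y z"
  have wf1: "wfE ?T1" using wfE_addleaf[OF wf x] .
  have fin1: "finite (verts ?T1)" using fin by simp
  have y1: "y \<in> verts ?T1" by simp
  have zn1: "z \<notin> verts ?T1" using zn yz by simp
  have sc1: "subcubic ?T1" using subcubic_addleaf[OF wf1 fin1 zn1 y1 sc'] by simp
  have sc: "subcubic G" and dx: "degree G x \<le> 2" using subcubic_addleaf[OF wf fin yn x sc1] by auto
  have n: "gamma_e G = gamma G" using IH gamma_e_le_gamma[OF fin] by simp
  have finT: "finite (verts ?T)" using fin by simp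
  have gT1: "gamma ?T \<le> gamma G + 1"
  proof -
    obtain Dg where Dg: "dominating G Dg" "card Dg = gamma G" using gamma_ex[OF fin] by blast
    have "dominating ?T (insert y Dg)"
    proof -
      have "insert y Dg \<subseteq> verts ?T" using Dg(1) unfolding dominating_def by auto
      moreover have "\<exists>u \<in> insert y Dg. {u, v} \<in> edges ?T" if "v \<in> verts ?T - insert y Dg" for v
      proof (cases "v = z")
        case True then show ?thesis by auto
      next
        case False
        then have "v \<in> verts G - Dg" using that by auto
        then show ?thesis using Dg(1) unfolding dominating_def by auto
      qed
      ultimately show ?thesis unfolding dominating_def by blast
    qed
    then have "gamma ?T \<le> card (insert y Dg)" by (rule gamma_le)
    also have "\<dots> \<le> Suc (card Dg)" using finite_subset[OF _ fin] Dg(1)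
      unfolding dominating_def by (intro card_insert_Suc) auto
    finally show ?thesis using Dg(2) by simp
  qed
  obtain D where D: "exp_dom ?T D" "card D = gamma_e ?T" using gamma_e_ex[OF finT] by blast
  have DV: "D \<subseteq> insert z (verts ?T1)" using D(1) unfolding exp_dom_def by simp
  have finD: "finite D" using finite_subset[OF DV] fin by simp
  have wT: "1 \<le> wgt ?T D u" if "u \<in> verts ?T" for u
  proof -
    have "\<forall>u\<in>verts ?T. 1 \<le> wgt ?T D u" using D(1) unfolding exp_dom_def by blast
    then show ?thesis using that by blast
  qed
  define D1 where "D1 = D - {z}"
  define D0 where "D0 = D1 - {y}"
  have D1V: "D1 \<subseteq> insert y (verts G)" using DV D1_def by auto
  have D0V: "D0 \<subseteq> verts G" using D1V D0_def by auto
  have tail: "y \<in> D \<or> z \<in> D"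
  proof (rule ccontr)
    assume "\<not> (y \<in> D \<or> z \<in> D)"
    then have DG: "D \<subseteq> verts G" and DT1: "D \<subseteq> verts ?T1" using DV by auto
    have "wgt ?T D z = wgt ?T1 D y / 2" using wgt_addleaf_new[OF wf1 zn1 DT1] .
    also have "wgt ?T1 D y = wgt G D x / 2" using wgt_addleaf_new[OF wf yn DG] .
    finally have "wgt ?T D z = wgt G D x / 4" by simp
    moreover have "wgt G D x \<le> 3" using wgt_le3[OF T sc DG x] .
    moreover have "1 \<le> wgt ?T D z" using wT by simp
    ultimately show False by simp
  qed
  have bound: "wgt ?T D u \<le> wgt G D0 u + half_pow (dist (del G D0) x u)" if u: "u \<in> verts G" for u
  proof -
    have uT1: "u \<in> verts ?T1" using u by simp
    have uy: "u \<noteq> y" using u yn by auto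
    have e1: "wgt ?T D u = wgt ?T1 D1 u + (if z \<in> D then half_pow (dist (del ?T1 D1) u y) else 0)"
      using wgt_addleaf_old[OF wf1 fin1 zn1 DV uT1] D1_def by simp
    have e2: "wgt ?T1 D1 u = wgt G D0 u + (if y \<in> D1 then half_pow (dist (del G D0) u x) else 0)"
      using wgt_addleaf_old[OF wf fin yn D1V u] D0_def by simp
    have e3: "dist (del ?T1 D1) u y = (if y \<in> D1 then \<infinity> else eSuc (dist (del G D1) u x))"
      using dist_leaf[OF wf yn uy] .
    have sy: "dist (del G D0) u x = dist (del G D0) x u" by (rule dist_sym)
    show ?thesis
    proof (cases "y \<in> D")
      case True
      then have "y \<in> D1" using yz D1_def by simp
      then show ?thesis using e1 e2 e3 sy by simp
    next
      case False
      then have "y \<notin> D1" "D0 = D1" using D1_def D0_def by auto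
      then have "wgt ?T D u \<le> wgt G D0 u + half_pow (dist (del G D0) u x) / 2"
        using e1 e2 e3 hp_nonneg[of "dist (del G D0) u x"] by (simp add: hp_eSuc)
      then show ?thesis using sy hp_nonneg[of "dist (del G D0) u x"] by simp
    qed
  qed
  have cD0: "card D0 < card D"
  proof (rule psubset_card_mono[OF finD])
    show "D0 \<subset> D" using tail yz unfolding D0_def D1_def by auto
  qed
  have ex: "exp_dom G (insert x D0)"
  proof (rule replace[OF T sc D0V x dx])
    fix u assume u: "u \<in> verts G" "u \<notin> D0"
    show "1 \<le> wgt G D0 u + half_pow (dist (del G D0) x u)"
      using bound[OF u(1)] wT[of u] u(1) by simp
  qed
  have finD0: "finite D0" using finite_subset[OF D0V fin] .
  show ?thesis
  proof (cases "gammaX G (verts G - {x}) < gamma G")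
    case True
    obtain Dx where Dx: "Dx \<subseteq> verts G" "card Dx = gammaX G (verts G - {x})"
      "\<forall>v \<in> (verts G - {x}) - Dx. \<exists>u \<in> Dx. {u, v} \<in> edges G"
      using gammaX_ex[of "verts G - {x}" G] by blast
    have "dominating ?T (insert y Dx)"
    proof -
      have "insert y Dx \<subseteq> verts ?T" using Dx(1) by auto
      moreover have "\<exists>u \<in> insert y Dx. {u, v} \<in> edges ?T" if v: "v \<in> verts ?T - insert y Dx" for v
      proof -
        consider "v = z" | "v = x" | "v \<in> (verts G - {x}) - Dx" using v by auto
        then show ?thesis
        proof cases
          case 1 then show ?thesis by auto
        next
          case 2 then show ?thesis by (auto simp: insert_commute)
        next
          case 3 then show ?thesis using Dx(3) by auto
        qed
      qed
      ultimately show ?thesis unfolding dominating_def by blast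
    qed
    then have "gamma ?T \<le> card (insert y Dx)" by (rule gamma_le)
    also have "\<dots> \<le> Suc (card Dx)" using finite_subset[OF Dx(1) fin] by (rule card_insert_Suc)
    also have "\<dots> \<le> gamma G" using True Dx(2) by simp
    also have "\<dots> = gamma_e G" using n by simp
    also have "\<dots> \<le> card (insert x D0)" using ex by (rule gamma_e_le)
    also have "\<dots> \<le> Suc (card D0)" using finD0 by (rule card_insert_Suc)
    also have "\<dots> \<le> card D" using cD0 by simp
    finally show ?thesis using D(2) by simp
  next
    case False
    then have tau: "1 < tau G x" using cond by simp
    show ?thesis
    proof (rule ccontr)
      assume "\<not> gamma ?T \<le> gamma_e ?T"
      then have "card D \<le> gamma G" using gT1 D(2) by simp
      then have small: "card D0 < gamma_e G" using cD0 n by simp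
      show False
      proof (cases "x \<in> D0")
        case True
        then have "gamma_e G \<le> card D0" using gamma_e_le[OF ex] by (simp add: insert_absorb)
        then show False using small by simp
      next
        case xD0: False
        have "ereal 1 \<in> {ereal t | t. \<exists>D. D \<subseteq> verts G \<and> card D < gamma_e G \<and> x \<notin> D \<and>
          (\<forall>u \<in> verts G - D. wgt G D u + half_pow (dist (del G D) x u) * t \<ge> 1)}"
        proof -
          have "\<forall>u \<in> verts G - D0. wgt G D0 u + half_pow (dist (del G D0) x u) * 1 \<ge> 1"
            using bound wT by fastforce
          then show ?thesis using D0V small xD0 by blast
        qed
        then have "tau G x \<le> ereal 1" unfolding tau_def by (rule Inf_lower)
        then have "tau G x \<le> 1" by (simp add: one_ereal_def)
        then show False using tau by (simp add: not_less[symmetric])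
      qed
    qed
  qed
qed

lemma case3:
  assumes T: "G \<in> ltree" and w: "w \<in> verts G" and xn: "x \<notin> verts G" and yn: "y \<notin> verts G"
    and zn: "z \<notin> verts G" and xy: "x \<noteq> y" and yz: "y \<noteq> z" and xz: "x \<noteq> z"
    and tau: "1/2 < tau G w"
    and sc': "subcubic (addleaf (addleaf (addleaf G w x) x y) y z)" and IH: "gamma G \<le> gamma_e G"
  shows "gamma (addleaf (addleaf (addleaf G w x) x y) y z) \<le> gamma_e (addleaf (addleaf (addleaf G w x) x y) y z)"
proof -
  have wf: "wfE G" and fin: "finite (verts G)" using ltree_wf[OF T] by auto
  let ?T1 = "addleaf G w x"
  let ?T2 = "addleaf ?T1 x y"
  let ?T = "addleaf ?T2 y z"
  have wf1: "wfE ?T1" using wfE_addleaf[OF wf w] .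
  have fin1: "finite (verts ?T1)" using fin by simp
  have x1: "x \<in> verts ?T1" by simp
  have yn1: "y \<notin> verts ?T1" using yn xy by simp
  have wf2: "wfE ?T2" using wfE_addleaf[OF wf1 x1] .
  have fin2: "finite (verts ?T2)" using fin by simp
  have y2: "y \<in> verts ?T2" by simp
  have zn2: "z \<notin> verts ?T2" using zn yz xz by simp
  have sc2: "subcubic ?T2" using subcubic_addleaf[OF wf2 fin2 zn2 y2 sc'] by simp
  have sc1: "subcubic ?T1" using subcubic_addleaf[OF wf1 fin1 yn1 x1 sc2] by simp
  have sc: "subcubic G" and dw: "degree G w \<le> 2" using subcubic_addleaf[OF wf fin xn w sc1] by auto
  have n: "gamma_e G = gamma G" using IH gamma_e_le_gamma[OF fin] by simp
  have finT: "finite (verts ?T)" using fin by simp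
  have gT1: "gamma ?T \<le> gamma G + 1"
  proof -
    obtain Dg where Dg: "dominating G Dg" "card Dg = gamma G" using gamma_ex[OF fin] by blast
    have "dominating ?T (insert y Dg)"
    proof -
      have "insert y Dg \<subseteq> verts ?T" using Dg(1) unfolding dominating_def by auto
      moreover have "\<exists>u \<in> insert y Dg. {u, v} \<in> edges ?T" if v: "v \<in> verts ?T - insert y Dg" for v
      proof -
        consider "v = z" | "v = x" | "v \<in> verts G - Dg" using v by auto
        then show ?thesis
        proof cases
          case 1 then show ?thesis by auto
        next
          case 2 then show ?thesis by (auto simp: insert_commute)
        next
          case 3 then show ?thesis using Dg(1) unfolding dominating_def by auto
        qed
      qed
      ultimately show ?thesis unfolding dominating_def by blast
    qed
    then have "gamma ?T \<le> card (insert y Dg)" by (rule gamma_le)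
    also have "\<dots> \<le> Suc (card Dg)" using finite_subset[OF _ fin] Dg(1)
      unfolding dominating_def by (intro card_insert_Suc) auto
    finally show ?thesis using Dg(2) by simp
  qed
  obtain D where D: "exp_dom ?T D" "card D = gamma_e ?T" using gamma_e_ex[OF finT] by blast
  have DV: "D \<subseteq> insert z (verts ?T2)" using D(1) unfolding exp_dom_def by simp
  have finD: "finite D" using finite_subset[OF DV] fin by simp
  have wT: "1 \<le> wgt ?T D u" if "u \<in> verts ?T" for u
  proof -
    have "\<forall>u\<in>verts ?T. 1 \<le> wgt ?T D u" using D(1) unfolding exp_dom_def by blast
    then show ?thesis using that by blast
  qed
  define D2 where "D2 = D - {z}"
  define D1 where "D1 = D2 - {y}"
  define D0 where "D0 = D1 - {x}"
  have D2V: "D2 \<subseteq> insert y (verts ?T1)" using DV D2_def by auto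
  have D1V: "D1 \<subseteq> insert x (verts G)" using D2V D1_def by auto
  have D0V: "D0 \<subseteq> verts G" using D1V D0_def by auto
  have finD0: "finite D0" using finite_subset[OF D0V fin] .
  have E: "wgt ?T D u = wgt G D0 u + (if x \<in> D1 then half_pow (dist (del G D0) u w) else 0)
      + (if y \<in> D2 then half_pow (dist (del ?T1 D1) u x) else 0)
      + (if z \<in> D then half_pow (dist (del ?T2 D2) u y) else 0)" if u: "u \<in> verts G" for u
  proof -
    have uT1: "u \<in> verts ?T1" and uT2: "u \<in> verts ?T2" using u by auto
    have e1: "wgt ?T D u = wgt ?T2 D2 u + (if z \<in> D then half_pow (dist (del ?T2 D2) u y) else 0)"
      using wgt_addleaf_old[OF wf2 fin2 zn2 DV uT2] D2_def by simp
    have e2: "wgt ?T2 D2 u = wgt ?T1 D1 u + (if y \<in> D2 then half_pow (dist (del ?T1 D1) u x) else 0)"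
      using wgt_addleaf_old[OF wf1 fin1 yn1 D2V uT1] D1_def by simp
    have e3: "wgt ?T1 D1 u = wgt G D0 u + (if x \<in> D1 then half_pow (dist (del G D0) u w) else 0)"
      using wgt_addleaf_old[OF wf fin xn D1V u] D0_def by simp
    show ?thesis using e1 e2 e3 by simp
  qed
  have f2: "dist (del ?T2 D2) u y = (if y \<in> D2 then \<infinity> else eSuc (dist (del ?T1 D2) u x))"
    if "u \<in> verts G" for u
  proof -
    have "u \<noteq> y" using that yn by auto
    then show ?thesis by (rule dist_leaf[OF wf1 yn1])
  qed
  have f1: "dist (del ?T1 D') u x = (if x \<in> D' then \<infinity> else eSuc (dist (del G D') u w))"
    if "u \<in> verts G" for u D'
  proof -
    have "u \<noteq> x" using that xn by auto
    then show ?thesis by (rule dist_leaf[OF wf xn])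
  qed
  show ?thesis
  proof (rule ccontr)
    assume "\<not> gamma ?T \<le> gamma_e ?T"
    then have cDn: "card D \<le> gamma_e G" using gT1 D(2) n by simp
    show False
    proof (cases "x \<in> D")
      case xD: True
      have x12: "x \<in> D1" "x \<in> D2" using xD xy xz D1_def D2_def by auto
      have yz_in: "y \<in> D \<or> z \<in> D"
      proof (rule ccontr)
        assume "\<not> (y \<in> D \<or> z \<in> D)"
        then have DT1: "D \<subseteq> verts ?T1" and DT2: "D \<subseteq> verts ?T2" using DV by auto
        have "wgt ?T D z = wgt ?T2 D y / 2" using wgt_addleaf_new[OF wf2 zn2 DT2] .
        also have "wgt ?T2 D y = wgt ?T1 D x / 2" using wgt_addleaf_new[OF wf1 yn1 DT1] .
        also have "wgt ?T1 D x = 2" using wgt_D[OF finD DT1 xD] .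
        finally have "wgt ?T D z = 1/2" by simp
        moreover have "1 \<le> wgt ?T D z" using wT by simp
        ultimately show False by simp
      qed
      have bound: "wgt ?T D u = wgt G D0 u + half_pow (dist (del G D0) w u)" if u: "u \<in> verts G" for u
        using E[OF u] f2[OF u] f1[OF u, of D1] f1[OF u, of D2] x12 dist_sym[of "del G D0" u w] by simp
      have ex: "exp_dom G (insert w D0)"
      proof (rule replace[OF T sc D0V w dw])
        fix u assume u: "u \<in> verts G" "u \<notin> D0"
        show "1 \<le> wgt G D0 u + half_pow (dist (del G D0) w u)"
          using bound[OF u(1)] wT[of u] u(1) by simp
      qed
      obtain t where t: "t \<in> D" "t \<in> {y, z}" using yz_in by blast
      have "insert x (insert t D0) \<subseteq> D" using t xD D0_def D1_def D2_def by auto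
      then have "card (insert x (insert t D0)) \<le> card D" using finD by (rule card_mono[rotated])
      moreover have "card (insert x (insert t D0)) = card D0 + 2"
        using t finD0 xy xz unfolding D0_def D1_def D2_def by auto
      ultimately have "card D0 + 2 \<le> card D" by simp
      moreover have "gamma_e G \<le> card (insert w D0)" using ex by (rule gamma_e_le)
      moreover have "card (insert w D0) \<le> Suc (card D0)" using finD0 by (rule card_insert_Suc)
      ultimately show False using cDn by simp
    next
      case xD: False
      have x12: "x \<notin> D1" "x \<notin> D2" "D1 = D0" using xD D0_def D1_def D2_def by auto
      have tail: "y \<in> D \<or> z \<in> D"
      proof (rule ccontr)
        assume "\<not> (y \<in> D \<or> z \<in> D)"
        then have DG: "D \<subseteq> verts G" and DT1: "D \<subseteq> verts ?T1" and DT2: "D \<subseteq> verts ?T2"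
          using DV xD by auto
        have "wgt ?T D z = wgt ?T2 D y / 2" using wgt_addleaf_new[OF wf2 zn2 DT2] .
        also have "wgt ?T2 D y = wgt ?T1 D x / 2" using wgt_addleaf_new[OF wf1 yn1 DT1] .
        also have "wgt ?T1 D x = wgt G D w / 2" using wgt_addleaf_new[OF wf xn DG] .
        finally have "wgt ?T D z = wgt G D w / 8" by simp
        moreover have "wgt G D w \<le> 3" using wgt_le3[OF T sc DG w] .
        moreover have "1 \<le> wgt ?T D z" using wT by simp
        ultimately show False by simp
      qed
      have bound: "wgt ?T D u \<le> wgt G D0 u + half_pow (dist (del G D0) w u) / 2"
        if u: "u \<in> verts G" for u
      proof -
        have sy: "dist (del G D0) u w = dist (del G D0) w u" by (rule dist_sym)
        have hn: "0 \<le> half_pow (dist (del G D0) w u)" by (rule hp_nonneg)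
        show ?thesis
        proof (cases "y \<in> D")
          case True
          then have "y \<in> D2" using yz D2_def by simp
          then show ?thesis using E[OF u] f2[OF u] f1[OF u, of D1] x12 sy by (simp add: hp_eSuc)
        next
          case False
          then have "y \<notin> D2" "D2 = D1" using D2_def D1_def by auto
          then have "wgt ?T D u \<le> wgt G D0 u + half_pow (dist (del G D0) w u) / 4"
            using E[OF u] f2[OF u] f1[OF u, of D2] x12 sy by (simp add: hp_eSuc hp_nonneg)
          then show ?thesis using hn by simp
        qed
      qed
      have cD0: "card D0 < card D"
      proof (rule psubset_card_mono[OF finD])
        show "D0 \<subset> D" using tail yz unfolding D0_def D1_def D2_def by auto
      qed
      show False
      proof (cases "w \<in> D0")
        case True
        have ex: "exp_dom G (insert w D0)"
        proof (rule replace[OF T sc D0V w dw])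
          fix u assume u: "u \<in> verts G" "u \<notin> D0"
          have "dist (del G D0) w u = \<infinity>" using True by (intro dist_notin) simp
          then show "1 \<le> wgt G D0 u + half_pow (dist (del G D0) w u)"
            using bound[OF u(1)] wT[of u] u(1) by simp
        qed
        then have "gamma_e G \<le> card D0" using gamma_e_le True by (metis insert_absorb)
        then show False using cD0 cDn by simp
      next
        case wD0: False
        have "ereal (1/2) \<in> {ereal t | t. \<exists>D. D \<subseteq> verts G \<and> card D < gamma_e G \<and> w \<notin> D \<and>
          (\<forall>u \<in> verts G - D. wgt G D u + half_pow (dist (del G D) w u) * t \<ge> 1)}"
        proof -
          have "\<forall>u \<in> verts G - D0. wgt G D0 u + half_pow (dist (del G D0) w u) * (1/2) \<ge> 1"
          proof
            fix u assume "u \<in> verts G - D0"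
            then show "wgt G D0 u + half_pow (dist (del G D0) w u) * (1/2) \<ge> 1"
              using bound[of u] wT[of u] by simp
          qed
          moreover have "card D0 < gamma_e G" using cD0 cDn by simp
          ultimately show ?thesis using D0V wD0 by blast
        qed
        then have "tau G w \<le> ereal (1/2)" unfolding tau_def by (rule Inf_lower)
        moreover have "ereal (1/2) = 1/2"
          using ereal_divide[of 1 2] by (simp add: one_ereal_def numeral_eq_ereal)
        ultimately show False using tau by (simp add: not_less[symmetric])
      qed
    qed
  qed
qed

lemma main: "(V, E) \<in> obtainable \<Longrightarrow> subcubic (V, E) \<Longrightarrow> gamma (V, E) \<le> gamma_e (V, E)"
proof (induction V E rule: obtainable.induct)
  case (base v)
  let ?G = "({v}, {}) :: 'a graph"
  have "dominating ?G {v}" unfolding dominating_def by simp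
  then have g: "gamma ?G \<le> 1" using gamma_le by fastforce
  obtain D where D: "exp_dom ?G D" "card D = gamma_e ?G" using gamma_e_ex[of ?G] by auto
  have "gamma_e ?G \<noteq> 0"
  proof
    assume "gamma_e ?G = 0"
    then have "card D = 0" using D by simp
    moreover have "finite D" using D(1) unfolding exp_dom_def by (auto intro: finite_subset)
    ultimately have "D = {}" by simp
    then have "wgt ?G D v = 0" unfolding wgt_def by simp
    moreover have "1 \<le> wgt ?G D v" using D(1) unfolding exp_dom_def by simp
    ultimately show False by simp
  qed
  then show ?case using g by simp
next
  case (op1 V E x y)
  have T: "(V, E) \<in> ltree" using obtainable_ltree[OF op1.hyps(1)] .
  have wf: "wfE (V, E)" and fin: "finite (verts (V, E))" using ltree_wf[OF T] by auto
  have sc': "subcubic (addleaf (V, E) x y)" using op1.prems unfolding op1_eq .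
  have "subcubic (V, E)" using subcubic_addleaf[OF wf fin _ _ sc'] op1.hyps by simp
  then have IH: "gamma (V, E) \<le> gamma_e (V, E)" using op1.IH by simp
  show ?case unfolding op1_eq
    by (rule case1[OF T _ _ _ sc' IH]) (use op1.hyps in simp_all)
next
  case (op2 V E x y z)
  have T: "(V, E) \<in> ltree" using obtainable_ltree[OF op2.hyps(1)] .
  have wf: "wfE (V, E)" and fin: "finite (verts (V, E))" using ltree_wf[OF T] by auto
  have sc': "subcubic (addleaf (addleaf (V, E) x y) y z)" using op2.prems unfolding op2_eq .
  have wf1: "wfE (addleaf (V, E) x y)" using wfE_addleaf[OF wf] op2.hyps by simp
  have "subcubic (addleaf (V, E) x y)"
    using subcubic_addleaf[OF wf1 _ _ _ sc'] fin op2.hyps by simp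
  then have "subcubic (V, E)" using subcubic_addleaf[OF wf fin] op2.hyps by simp
  then have IH: "gamma (V, E) \<le> gamma_e (V, E)" using op2.IH by simp
  show ?case unfolding op2_eq
    by (rule case2[OF T _ _ _ _ _ sc' IH]) (use op2.hyps in simp_all)
next
  case (op3 V E w x y z)
  have T: "(V, E) \<in> ltree" using obtainable_ltree[OF op3.hyps(1)] .
  have wf: "wfE (V, E)" and fin: "finite (verts (V, E))" using ltree_wf[OF T] by auto
  have sc': "subcubic (addleaf (addleaf (addleaf (V, E) w x) x y) y z)" using op3.prems unfolding op3_eq .
  have wf1: "wfE (addleaf (V, E) w x)" using wfE_addleaf[OF wf] op3.hyps by simp
  have wf2: "wfE (addleaf (addleaf (V, E) w x) x y)" using wfE_addleaf[OF wf1] by simp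
  have fin1: "finite (verts (addleaf (V, E) w x))" using fin by simp
  have fin2: "finite (verts (addleaf (addleaf (V, E) w x) x y))" using fin by simp
  have "z \<notin> verts (addleaf (addleaf (V, E) w x) x y)" "y \<in> verts (addleaf (addleaf (V, E) w x) x y)"
    using op3.hyps by auto
  from subcubic_addleaf(1)[OF wf2 fin2 this sc']
  have s2: "subcubic (addleaf (addleaf (V, E) w x) x y)" .
  have "y \<notin> verts (addleaf (V, E) w x)" "x \<in> verts (addleaf (V, E) w x)"
    using op3.hyps by auto
  from subcubic_addleaf(1)[OF wf1 fin1 this s2]
  have "subcubic (addleaf (V, E) w x)" .
  then have "subcubic (V, E)" using subcubic_addleaf[OF wf fin] op3.hyps by simp
  then have IH: "gamma (V, E) \<le> gamma_e (V, E)" using op3.IH by simp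
  show ?case unfolding op3_eq
    by (rule case3[OF T _ _ _ _ _ _ _ _ sc' IH]) (use op3.hyps in simp_all)
qed

theorem lemma3:
  fixes T :: "'a graph"
  assumes "T \<in> obtainable" and "subcubic T"
  shows "gamma_e T = gamma T"
proof -
  obtain V E where VE: "T = (V, E)" by (cases T)
  have "(V, E) \<in> ltree" using obtainable_ltree assms(1) VE by simp
  then have fin: "finite (verts (V, E))" using ltree_wf by blast
  have "gamma (V, E) \<le> gamma_e (V, E)" using main assms VE by simp
  then show ?thesis using gamma_e_le_gamma[OF fin] VE by simp
qed

end
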